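(* For every $p\ge1$ and every $v\in L^p(\mathcal{D})$, $$\inf_{v_h\in\mathbb{V}_h}\|v-v_h\|_{L^p(\mathcal{D})}\to0\quad\text{as }h\to0.$$
   Context: Let $d=2$, $\mathcal{D}=(-L,L)^2$, $L>0$. For $m\in\mathbb{N}$ let $J=2^m$, $h=2L/J$, $\mathbf{x}_i=-L+ih$ ($i=0,\dots,J$). One-dimensional functions on $[-L,L]$ ($\chi_I$ = indicator of $I$): $\phi_1=\frac32\chi_{[\mathbf{x}_0,\mathbf{x}_1]}-\frac12\chi_{(\mathbf{x}_1,\mathbf{x}_2]}$; $\phi_i=-\frac12\chi_{(\mathbf{x}_{i-2},\mathbf{x}_{i-1}]}+\chi_{(\mathbf{x}_{i-1},\mathbf{x}_i]}-\frac12\chi_{(\mathbf{x}_i,\mathbf{x}_{i+1}]}$ for $i=2,\dots,J-1$; $\phi_J=-\frac12\chi_{(\mathbf{x}_{J-2},\mathbf{x}_{J-1}]}+\frac32\chi_{(\mathbf{x}_{J-1},\mathbf{x}_J]}$; $\psi_i$ solves $-\psi_i''=\phi_i$ on $(-L,L)$, $\psi_i(\pm L)=0$. Two-dimensional basis functions: $\boldsymbol\phi_{(i_1,i_2)}(x)=\frac{3}{2h^2}\big(\phi_{i_1}(x_1)\psi_{i_2}(x_2)+\psi_{i_1}(x_1)\phi_{i_2}(x_2)\big)$ for $i_1,i_2\in\{1,\dots,J\}$, and $\mathbb{V}_h=\mathrm{span}\{\boldsymbol\phi_{(i_1,i_2)}\}\subset L^p(\mathcal{D})$. *)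

theory Defs
  imports "HOL-Analysis.Analysis"
begin

definition meshJ :: "nat \<Rightarrow> nat" where "meshJ m = 2 ^ m"

definition meshh :: "real \<Rightarrow> nat \<Rightarrow> real" where
  "meshh L m = 2 * L / real (meshJ m)"

definition node :: "real \<Rightarrow> nat \<Rightarrow> nat \<Rightarrow> real" where
  "node L m i = - L + real i * meshh L m"

definition phi1 :: "real \<Rightarrow> nat \<Rightarrow> nat \<Rightarrow> real \<Rightarrow> real" where
  "phi1 L m i x =
    (let J = meshJ m; xg = node L m in
     if i = 1 then 3/2 * indicator {xg 0 .. xg 1} x - 1/2 * indicator {xg 1 <.. xg 2} x
     else if 2 \<le> i \<and> i \<le> J - 1 then
        - 1/2 * indicator {xg (i-2) <.. xg (i-1)} x + indicator {xg (i-1) <.. xg i} x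
        - 1/2 * indicator {xg i <.. xg (i+1)} x
     else if i = J then
        - 1/2 * indicator {xg (J-2) <.. xg (J-1)} x + 3/2 * indicator {xg (J-1) <.. xg J} x
     else 0)"

text \<open>psi_i: the solution of -psi'' = phi_i on (-L,L), psi(-L) = psi(L) = 0.
  Since phi_i is piecewise constant, "solution" is understood as: psi is C^1 on [-L,L]
  with psi'(x) = psi'(-L) - integral of phi_i over [-L,x]; psi is set to 0 outside [-L,L].\<close>
definition psi1 :: "real \<Rightarrow> nat \<Rightarrow> nat \<Rightarrow> real \<Rightarrow> real" where
  "psi1 L m i = (THE \<psi>. (\<forall>x. x \<notin> {-L..L} \<longrightarrow> \<psi> x = 0) \<and> \<psi> (-L) = 0 \<and> \<psi> L = 0 \<and>
     (\<exists>c. \<forall>x\<in>{-L..L}.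
        (\<psi> has_real_derivative (c - integral {-L..x} (phi1 L m i))) (at x within {-L..L})))"

definition bphi :: "real \<Rightarrow> nat \<Rightarrow> nat \<Rightarrow> nat \<Rightarrow> real \<times> real \<Rightarrow> real" where
  "bphi L m i1 i2 x = 3 / (2 * (meshh L m)\<^sup>2) *
     (phi1 L m i1 (fst x) * psi1 L m i2 (snd x) + psi1 L m i1 (fst x) * phi1 L m i2 (snd x))"

definition Vh :: "real \<Rightarrow> nat \<Rightarrow> (real \<times> real \<Rightarrow> real) set" where
  "Vh L m = {(\<lambda>x. \<Sum>i1\<in>{1..meshJ m}. \<Sum>i2\<in>{1..meshJ m}. c i1 i2 * bphi L m i1 i2 x) | c. True}"

definition dom2 :: "real \<Rightarrow> (real \<times> real) set" where
  "dom2 L = {-L<..<L} \<times> {-L<..<L}"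

definition in_Lp :: "real \<Rightarrow> (real \<times> real) set \<Rightarrow> (real \<times> real \<Rightarrow> real) \<Rightarrow> bool" where
  "in_Lp p D v \<longleftrightarrow> set_borel_measurable lebesgue D v \<and>
                    set_integrable lebesgue D (\<lambda>x. \<bar>v x\<bar> powr p)"

definition Lp_norm :: "real \<Rightarrow> (real \<times> real) set \<Rightarrow> (real \<times> real \<Rightarrow> real) \<Rightarrow> real" where
  "Lp_norm p D v = (LINT x : D | lebesgue. \<bar>v x\<bar> powr p) powr (1 / p)"

end

theory Submission
  imports Defs
begin

definition UU :: "real \<Rightarrow> (real \<Rightarrow> real) \<Rightarrow> real \<Rightarrow> real" where
  "UU L u s = integral {-L..s} u"
definition cT :: "real \<Rightarrow> (real \<Rightarrow> real) \<Rightarrow> real" where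
  "cT L u = integral {-L..L} (UU L u) / (2*L)"
definition TT :: "real \<Rightarrow> (real \<Rightarrow> real) \<Rightarrow> real \<Rightarrow> real" where
  "TT L u x = (if x \<in> {-L..L} then cT L u * (x + L) - integral {-L..x} (UU L u) else 0)"

lemma UU_cont: "u integrable_on {-L..L} \<Longrightarrow> continuous_on {-L..L} (UU L u)"
  unfolding UU_def by (rule indefinite_integral_continuous_1)

lemma UU_deriv:
  assumes u: "u integrable_on {-L..L}" and x: "x \<in> {-L..L}"
  shows "((\<lambda>y. integral {-L..y} (UU L u)) has_real_derivative UU L u x) (at x within {-L..L})"
  unfolding has_real_derivative_iff_has_vector_derivative
  by (rule integral_has_vector_derivative[OF UU_cont[OF u] x])

lemma TT_deriv:
  assumes u: "u integrable_on {-L..L}" and x: "x \<in> {-L..L}"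
  shows "(TT L u has_real_derivative (cT L u - UU L u x)) (at x within {-L..L})"
proof -
  have 2: "((\<lambda>y. cT L u * (y + L)) has_real_derivative cT L u) (at x within {-L..L})"
    by (auto intro!: derivative_eq_intros)
  have 3: "((\<lambda>y. cT L u * (y + L) - integral {-L..y} (UU L u)) has_real_derivative (cT L u - UU L u x)) (at x within {-L..L})"
    using DERIV_diff[OF 2 UU_deriv[OF u x]] .
  show ?thesis
    by (rule has_field_derivative_transform_within[OF 3, of 1]) (use x in \<open>auto simp: TT_def\<close>)
qed

lemma THE_TT:
  assumes L: "L > 0" and u: "u integrable_on {-L..L}"
  shows "(THE \<psi>. (\<forall>x. x \<notin> {-L..L} \<longrightarrow> \<psi> x = 0) \<and> \<psi> (-L) = 0 \<and> \<psi> L = 0 \<and>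
     (\<exists>c. \<forall>x\<in>{-L..L}. (\<psi> has_real_derivative (c - integral {-L..x} u)) (at x within {-L..L}))) = TT L u"
proof (rule the_equality)
  show "(\<forall>x. x \<notin> {-L..L} \<longrightarrow> TT L u x = 0) \<and> TT L u (-L) = 0 \<and> TT L u L = 0 \<and>
     (\<exists>c. \<forall>x\<in>{-L..L}. (TT L u has_real_derivative (c - integral {-L..x} u)) (at x within {-L..L}))"
  proof (intro conjI)
    show "\<forall>x. x \<notin> {-L..L} \<longrightarrow> TT L u x = 0" by (simp add: TT_def)
    show "TT L u (-L) = 0" using L by (simp add: TT_def)
    show "TT L u L = 0" using L by (simp add: TT_def cT_def)
    show "\<exists>c. \<forall>x\<in>{-L..L}. (TT L u has_real_derivative (c - integral {-L..x} u)) (at x within {-L..L})"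
      using TT_deriv[OF u] unfolding UU_def by blast
  qed
next
  fix \<psi> assume H: "(\<forall>x. x \<notin> {-L..L} \<longrightarrow> \<psi> x = 0) \<and> \<psi> (-L) = 0 \<and> \<psi> L = 0 \<and>
     (\<exists>c. \<forall>x\<in>{-L..L}. (\<psi> has_real_derivative (c - integral {-L..x} u)) (at x within {-L..L}))"
  then obtain c where out: "\<forall>x. x \<notin> {-L..L} \<longrightarrow> \<psi> x = 0" and a: "\<psi> (-L) = 0" and b: "\<psi> L = 0"
    and dv: "\<forall>x\<in>{-L..L}. (\<psi> has_real_derivative (c - integral {-L..x} u)) (at x within {-L..L})"
    by blast
  define d where "d y = \<psi> y - (c * (y + L) - integral {-L..y} (UU L u))" for y
  have "\<exists>k. \<forall>y\<in>{-L..L}. d y = k"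
  proof (rule has_field_derivative_zero_constant)
    fix y assume y: "y \<in> {-L..L}"
    have 2: "((\<lambda>y. c * (y + L)) has_real_derivative c) (at y within {-L..L})"
      by (auto intro!: derivative_eq_intros)
    have "(d has_real_derivative ((c - integral {-L..y} u) - (c - UU L u y))) (at y within {-L..L})"
      unfolding d_def[abs_def] using dv y by (intro DERIV_diff 2 UU_deriv[OF u y]) auto
    then show "(d has_real_derivative 0) (at y within {-L..L})" by (simp add: UU_def)
  qed simp
  then obtain k where k: "\<forall>y\<in>{-L..L}. d y = k" by blast
  have "d (-L) = 0" using a by (simp add: d_def)
  then have dz: "\<forall>y\<in>{-L..L}. d y = 0" using k L by force
  then have "d L = 0" using L by simp
  then have "c * (2*L) = integral {-L..L} (UU L u)" using b by (simp add: d_def)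
  then have c: "c = cT L u" using L by (simp add: cT_def field_simps)
  show "\<psi> = TT L u"
  proof
    fix y show "\<psi> y = TT L u y"
    proof (cases "y \<in> {-L..L}")
      case True then show ?thesis using dz c by (simp add: d_def TT_def)
    next
      case False
      then have "\<psi> y = 0" using out by blast
      then show ?thesis using False by (auto simp: TT_def)
    qed
  qed
qed


lemma ind_int1: "indicat_real {c<..d} integrable_on {a..(b::real)}"
proof -
  have "{a..b} \<inter> {c<..d} \<in> lmeasurable"
    by (intro fmeasurable_Int_fmeasurable) auto
  then show ?thesis by (simp add: integrable_on_indicator Int_commute)
qed

lemma ind_int2: "indicat_real {c..d} integrable_on {a..(b::real)}"
proof -
  have "{a..b} \<inter> {c..d} \<in> lmeasurable"
    by (intro fmeasurable_Int_fmeasurable) auto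
  then show ?thesis by (simp add: integrable_on_indicator Int_commute)
qed

lemma intcm: "f integrable_on S \<Longrightarrow> (\<lambda>x. (c::real) * f x) integrable_on S"
  using integrable_on_cmult_left[of f S c] by simp

lemma phi1_int: "phi1 L m i integrable_on {a..b}"
  unfolding phi1_def Let_def
  by (cases "i = 1"; cases "2 \<le> i \<and> i \<le> meshJ m - 1"; cases "i = meshJ m")
     (auto intro!: integrable_diff integrable_add intcm ind_int1 ind_int2 integrable_0)

lemma TT_lin:
  assumes I: "finite I" and f: "\<And>i. i \<in> I \<Longrightarrow> f i integrable_on {-L..L}" and x: "x \<in> {-L..L}"
  shows "TT L (\<lambda>t. \<Sum>i\<in>I. a i * f i t) x = (\<Sum>i\<in>I. a i * TT L (f i) x)"
proof -
  have U: "UU L (\<lambda>t. \<Sum>i\<in>I. a i * f i t) s = (\<Sum>i\<in>I. a i * UU L (f i) s)" if s: "s \<in> {-L..L}" for s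
  proof -
    have fi: "f i integrable_on {-L..s}" if "i \<in> I" for i
      using integrable_subinterval_real[OF f[OF that]] s by auto
    show ?thesis unfolding UU_def
      by (subst integral_sum[OF I]) (auto intro!: sum.cong intcm fi simp: integral_mult)
  qed
  have Ui: "UU L (f i) integrable_on {-L..y}" if "i \<in> I" "y \<in> {-L..L}" for i y
    using integrable_subinterval_real[OF integrable_continuous_interval[OF UU_cont[OF f[OF that(1)]]]] that(2)
    by auto
  have I1: "integral {-L..y} (UU L (\<lambda>t. \<Sum>i\<in>I. a i * f i t)) = (\<Sum>i\<in>I. a i * integral {-L..y} (UU L (f i)))"
    if y: "y \<in> {-L..L}" for y
  proof -
    have "integral {-L..y} (UU L (\<lambda>t. \<Sum>i\<in>I. a i * f i t)) = integral {-L..y} (\<lambda>s. \<Sum>i\<in>I. a i * UU L (f i) s)"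
      by (rule integral_cong) (use y in \<open>auto intro!: U\<close>)
    also have "\<dots> = (\<Sum>i\<in>I. a i * integral {-L..y} (UU L (f i)))"
      by (subst integral_sum[OF I]) (auto intro!: sum.cong intcm Ui y simp: integral_mult)
    finally show ?thesis .
  qed
  have L: "-L \<le> L" using x by auto
  have c: "cT L (\<lambda>t. \<Sum>i\<in>I. a i * f i t) = (\<Sum>i\<in>I. a i * cT L (f i))"
    unfolding cT_def using I1[of L] L by (simp add: sum_divide_distrib)
  have "TT L (\<lambda>t. \<Sum>i\<in>I. a i * f i t) x = (\<Sum>i\<in>I. a i * cT L (f i)) * (x+L) - (\<Sum>i\<in>I. a i * integral {-L..x} (UU L (f i)))"
    using x by (simp add: TT_def I1 c)
  also have "\<dots> = (\<Sum>i\<in>I. a i * (cT L (f i) * (x+L) - integral {-L..x} (UU L (f i))))"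
    by (simp add: sum_distrib_right sum_subtractf right_diff_distrib mult.assoc)
  also have "\<dots> = (\<Sum>i\<in>I. a i * TT L (f i) x)"
    using x by (simp add: TT_def)
  finally show ?thesis .
qed

lemma TT_diff:
  assumes "u integrable_on {-L..L}" "w integrable_on {-L..L}" "x \<in> {-L..L}"
  shows "TT L (\<lambda>t. u t - w t) x = TT L u x - TT L w x"
proof -
  have "TT L (\<lambda>t. \<Sum>i\<in>{0::nat,1}. (if i = 0 then 1 else -1) * (if i = 0 then u else w) t) x
    = (\<Sum>i\<in>{0::nat,1}. (if i = 0 then 1 else -1) * TT L (if i = 0 then u else w) x)"
    by (rule TT_lin) (use assms in auto)
  then show ?thesis by simp
qed

lemma int_bound:
  fixes f :: "real \<Rightarrow> real"
  assumes f: "f integrable_on {a..b}" and ab: "a \<le> b" and B: "\<And>t. t \<in> {a..b} \<Longrightarrow> \<bar>f t\<bar> \<le> B"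
  shows "\<bar>integral {a..b} f\<bar> \<le> B * (b - a)"
proof -
  have "norm (integral {a..b} f) \<le> integral {a..b} (\<lambda>_. B)"
    by (rule integral_norm_bound_integral) (use f B in auto)
  then show ?thesis using ab by (simp add: mult.commute)
qed

lemma TT_bound:
  assumes L: "L > 0" and u: "u integrable_on {-L..L}" and B: "\<And>t. t \<in> {-L<..L} \<Longrightarrow> \<bar>u t\<bar> \<le> d"
  shows "\<bar>TT L u x\<bar> \<le> 8 * L^2 * d"
proof -
  have d0: "0 \<le> d" using B[of L] L by force
  define u' where "u' t = (if t = -L then 0 else u t)" for t
  have UB: "\<bar>UU L u s\<bar> \<le> 2 * L * d" if s: "s \<in> {-L..L}" for s
  proof -
    have "integral {-L..s} u = integral {-L..s} u'"
      by (rule integral_spike[where S="{-L}"]) (auto simp: u'_def)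
    moreover have "u' integrable_on {-L..s}"
      by (rule integrable_spike[OF integrable_subinterval_real[OF u], where S="{-L}"]) (use s in \<open>auto simp: u'_def\<close>)
    moreover have "\<bar>u' t\<bar> \<le> d" if "t \<in> {-L..s}" for t
      using that s B[of t] d0 by (auto simp: u'_def)
    ultimately have "\<bar>integral {-L..s} u\<bar> \<le> d * (s - -L)"
      using int_bound[of u' "-L" s d] s by auto
    also have "\<dots> \<le> d * (2 * L)" using s d0 by (intro mult_left_mono) auto
    finally show ?thesis by (simp add: UU_def algebra_simps)
  qed
  have IB: "\<bar>integral {-L..y} (UU L u)\<bar> \<le> 4 * L^2 * d" if y: "y \<in> {-L..L}" for y
  proof -
    have "\<bar>integral {-L..y} (UU L u)\<bar> \<le> (2 * L * d) * (y - -L)"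
      using int_bound[of "UU L u" "-L" y "2*L*d"] y UB
        integrable_subinterval_real[OF integrable_continuous_interval[OF UU_cont[OF u]]] by auto
    also have "\<dots> \<le> (2 * L * d) * (2 * L)" using y d0 L by (intro mult_left_mono) auto
    finally show ?thesis by (simp add: power2_eq_square algebra_simps)
  qed
  have cB: "\<bar>cT L u\<bar> \<le> 2 * L * d"
    using IB[of L] L by (auto simp: cT_def power2_eq_square abs_div field_simps)
  show ?thesis
  proof (cases "x \<in> {-L..L}")
    case True
    have e: "\<bar>cT L u * (x + L)\<bar> = \<bar>cT L u\<bar> * (x + L)" using True by (simp add: abs_mult)
    have "\<bar>TT L u x\<bar> \<le> \<bar>cT L u * (x + L)\<bar> + \<bar>integral {-L..x} (UU L u)\<bar>"
      using True unfolding TT_def by (simp add: abs_triangle_ineq4)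
    also have "\<dots> = \<bar>cT L u\<bar> * (x + L) + \<bar>integral {-L..x} (UU L u)\<bar>" using e by simp
    also have "\<dots> \<le> (2 * L * d) * (2 * L) + 4 * L^2 * d"
      using True L d0 by (intro add_mono mult_mono cB IB) auto
    finally show ?thesis by (simp add: power2_eq_square algebra_simps)
  qed (use L d0 in \<open>auto simp add: TT_def\<close>)
qed


definition om :: "real \<Rightarrow> nat \<Rightarrow> real" where "om L k = real k * pi / (2*L)"
definition sn :: "real \<Rightarrow> nat \<Rightarrow> real \<Rightarrow> real" where "sn L k x = sin (om L k * (x + L))"

lemma psi1_TT: "L > 0 \<Longrightarrow> psi1 L m i = TT L (phi1 L m i)"
  unfolding psi1_def by (rule THE_TT) (auto intro: phi1_int)

lemma sn_cont: "continuous_on S (sn L k)"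
  unfolding sn_def by (intro continuous_intros)

lemma sn_int: "sn L k integrable_on {a..b}"
  by (rule integrable_continuous_interval[OF sn_cont])

lemma TT_sn:
  assumes L: "L > 0" and k: "k \<ge> 1" and x: "x \<in> {-L..L}"
  shows "TT L (sn L k) x = sn L k x / (om L k)^2"
proof -
  define w where "w = om L k"
  have w: "w > 0" using L k by (simp add: w_def om_def)
  have snw: "sn L k t = sin (w * (t + L))" for t by (simp add: sn_def w_def)
  have U: "UU L (sn L k) s = (1 - cos (w * (s + L))) / w" if s: "s \<in> {-L..L}" for s
  proof -
    have "(sn L k has_integral ((- cos (w * (s + L)) / w) - (- cos (w * (-L + L)) / w))) {-L..s}"
    proof (rule fundamental_theorem_of_calculus)
      show "-L \<le> s" using s by simp
      fix t assume "t \<in> {-L..s}"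
      have "((\<lambda>t. - cos (w * (t + L)) / w) has_real_derivative (sin (w * (t + L)) * w / w)) (at t within {-L..s})"
        by (auto intro!: derivative_eq_intros)
      then have "((\<lambda>t. - cos (w * (t + L)) / w) has_real_derivative sn L k t) (at t within {-L..s})"
        using w by (simp add: snw)
      then show "((\<lambda>t. - cos (w * (t + L)) / w) has_vector_derivative sn L k t) (at t within {-L..s})"
        by (simp add: has_real_derivative_iff_has_vector_derivative)
    qed
    then show ?thesis unfolding UU_def by (simp add: integral_unique diff_divide_distrib)
  qed
  have I: "integral {-L..y} (UU L (sn L k)) = ((y + L) / w - sin (w * (y + L)) / w^2)" if y: "y \<in> {-L..L}" for y
  proof -
    have "(UU L (sn L k) has_integral (((y + L) / w - sin (w * (y + L)) / w^2) - ((-L + L) / w - sin (w * (-L + L)) / w^2))) {-L..y}"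
    proof (rule fundamental_theorem_of_calculus)
      show "-L \<le> y" using y by simp
      fix t assume t: "t \<in> {-L..y}"
      have "((\<lambda>t. (t + L) / w - sin (w * (t + L)) / w^2) has_real_derivative (1 / w - cos (w * (t + L)) * w / w^2)) (at t within {-L..y})"
        using w by (auto intro!: derivative_eq_intros simp: field_simps power2_eq_square)
      then have "((\<lambda>t. (t + L) / w - sin (w * (t + L)) / w^2) has_real_derivative UU L (sn L k) t) (at t within {-L..y})"
        using w t y by (simp add: U power2_eq_square diff_divide_distrib)
      then show "((\<lambda>t. (t + L) / w - sin (w * (t + L)) / w^2) has_vector_derivative UU L (sn L k) t) (at t within {-L..y})"
        by (simp add: has_real_derivative_iff_has_vector_derivative)
    qed
    then show ?thesis by (simp add: integral_unique)
  qed
  have wL: "w * (L + L) = real k * pi" using L by (simp add: w_def om_def field_simps)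
  have c: "cT L (sn L k) = 1 / w"
    using I[of L] L w wL by (simp add: cT_def field_simps)
  show ?thesis using x w unfolding TT_def
    by (simp add: I c sn_def w_def[symmetric] field_simps power2_eq_square)
qed


lemma meshJ_pos: "meshJ m > 0" by (simp add: meshJ_def)
lemma meshh_pos: "L > 0 \<Longrightarrow> meshh L m > 0" using meshJ_pos[of m] by (simp add: meshh_def)
lemma meshhJ: "meshh L m * real (meshJ m) = 2 * L" using meshJ_pos[of m] by (simp add: meshh_def)

lemma node_le_iff: "L > 0 \<Longrightarrow> node L m a \<le> node L m b \<longleftrightarrow> a \<le> b"
  using meshh_pos[of L m] by (simp add: node_def)
lemma node_less_iff: "L > 0 \<Longrightarrow> node L m a < node L m b \<longleftrightarrow> a < b"
  using meshh_pos[of L m] by (simp add: node_def)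

lemma cell_exists:
  assumes L: "L > 0" and x: "x \<in> {-L<..L}"
  obtains j where "1 \<le> j" "j \<le> meshJ m" "node L m (j-1) < x" "x \<le> node L m j"
proof -
  define h where "h = meshh L m"
  have h: "h > 0" using meshh_pos[OF L] by (simp add: h_def)
  define t where "t = (x + L) / h"
  have t0: "t > 0" using x h by (simp add: t_def)
  have tJ: "t \<le> real (meshJ m)" using x h meshhJ[of L m] by (simp add: t_def h_def field_simps)
  define j where "j = nat \<lceil>t\<rceil>"
  have cj: "real j = of_int \<lceil>t\<rceil>" using t0 by (simp add: j_def)
  have "1 \<le> \<lceil>t\<rceil>" using t0 by simp
  then have j1: "1 \<le> j" by (simp add: j_def le_nat_iff)
  have jJ: "j \<le> meshJ m" using tJ by (simp add: j_def nat_le_iff ceiling_le_iff)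
  have a: "real j - 1 < t" "t \<le> real j" using cj ceiling_correct[of t] by linarith+
  have "node L m (j-1) < x"
    using a(1) j1 h unfolding node_def h_def[symmetric] t_def
    by (simp add: of_nat_diff field_simps)
  moreover have "x \<le> node L m j"
    using a(2) h unfolding node_def h_def[symmetric] t_def by (simp add: field_simps)
  ultimately show ?thesis using that j1 jJ by blast
qed

lemma case2: fixes i j J :: nat assumes "2 \<le> i \<and> i \<le> J - 1" "2 \<le> J" "1 \<le> j" "j \<le> J"
  shows "(- 1/2 * (if j = i - 1 then 1 else 0) + (if j = i then 1 else 0) - 1/2 * (if j = i + 1 then 1 else 0) :: real)
   = (1 + (if j = 1 then 1/2 else 0) + (if j = J then 1/2 else 0)) * (if i = j then 1 else 0)
     - 1/2 * (if i = j + 1 then 1 else 0) - 1/2 * (if 2 \<le> j then 1 else 0) * (if i = j - 1 then 1 else 0)"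
proof -
  consider "j + 1 < i" | "j + 1 = i" | "j = i" | "j = i + 1" | "j > i + 1" by linarith
  then show ?thesis proof cases qed (use assms in auto)
qed
lemma case1: fixes i j J :: nat assumes "i = 1" "2 \<le> J" "1 \<le> j" "j \<le> J"
  shows "(3/2 * (if j = 1 then 1 else 0) - 1/2 * (if j = 2 then 1 else 0) :: real)
   = (1 + (if j = 1 then 1/2 else 0) + (if j = J then 1/2 else 0)) * (if i = j then 1 else 0)
     - 1/2 * (if i = j + 1 then 1 else 0) - 1/2 * (if 2 \<le> j then 1 else 0) * (if i = j - 1 then 1 else 0)"
proof -
  consider "j = 1" | "j = 2" | "j > 2" using assms by linarith
  then show ?thesis proof cases qed (use assms in auto)
qed
lemma case3: fixes i j J :: nat assumes "i = J" "i \<noteq> 1" "2 \<le> J" "1 \<le> j" "j \<le> J"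
  shows "(- 1/2 * (if j = i - 1 then 1 else 0) + 3/2 * (if j = i then 1 else 0) :: real)
   = (1 + (if j = 1 then 1/2 else 0) + (if j = J then 1/2 else 0)) * (if i = j then 1 else 0)
     - 1/2 * (if i = j + 1 then 1 else 0) - 1/2 * (if 2 \<le> j then 1 else 0) * (if i = j - 1 then 1 else 0)"
proof -
  consider "j + 1 < i" | "j + 1 = i" | "j = i" using assms by linarith
  then show ?thesis proof cases qed (use assms in auto)
qed

context
  fixes L :: real and m j :: nat and x :: real
  assumes L: "L > 0" and j1: "1 \<le> j" and c1: "node L m (j-1) < x" and c2: "x \<le> node L m j"
begin

lemma memb1: "node L m a < x \<longleftrightarrow> a < j"
proof
  assume "node L m a < x"
  then have "node L m a < node L m j" using c2 by simp
  then show "a < j" using node_less_iff[OF L] by blast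
next
  assume "a < j"
  then have "node L m a \<le> node L m (j-1)" using node_le_iff[OF L] by simp
  then show "node L m a < x" using c1 by simp
qed

lemma memb2: "x \<le> node L m b \<longleftrightarrow> j \<le> b"
proof
  assume "x \<le> node L m b"
  then have "node L m (j-1) < node L m b" using c1 by simp
  then show "j \<le> b" using node_less_iff[OF L] j1 by auto
next
  assume "j \<le> b"
  then have "node L m j \<le> node L m b" using node_le_iff[OF L] by simp
  then show "x \<le> node L m b" using c2 by simp
qed

lemma memb0: "node L m 0 \<le> x"
  using memb1[of 0] j1 by simp

lemma ind_suc: "indicat_real {node L m a<..node L m (Suc a)} x = (if j = Suc a then 1 else 0)"
  by (simp add: indicator_def memb1 memb2)

lemma ind_01: "indicat_real {node L m 0..node L m 1} x = (if j = 1 then 1 else 0)"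
  using j1 by (simp add: indicator_def memb0 memb2)

lemma phi_cell:
  assumes J2: "2 \<le> meshJ m" and jJ: "j \<le> meshJ m" and i: "1 \<le> i" "i \<le> meshJ m"
  shows "phi1 L m i x = (1 + (if j = 1 then 1/2 else 0) + (if j = meshJ m then 1/2 else 0)) * (if i = j then 1 else 0)
     - 1/2 * (if i = j + 1 then 1 else 0) - 1/2 * (if 2 \<le> j then 1 else 0) * (if i = j - 1 then 1 else 0)"
proof -
  consider "i = 1" | "2 \<le> i \<and> i \<le> meshJ m - 1" | "i = meshJ m" "i \<noteq> 1" using i J2 by linarith
  then show ?thesis
  proof cases
    case 1
    have e: "phi1 L m i x = 3/2 * (if j = 1 then 1 else 0) - 1/2 * (if j = 2 then 1 else 0)"
      using 1 ind_01 ind_suc[of 1] unfolding phi1_def Let_def by (simp add: numeral_2_eq_2)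
    show ?thesis unfolding e using case1[of i "meshJ m" j] 1 J2 j1 jJ by simp
  next
    case 2
    have s1: "i - 1 = Suc (i - 2)" "i = Suc (i - 1)" using 2 by auto
    have e: "phi1 L m i x = - 1/2 * (if j = i - 1 then 1 else 0) + (if j = i then 1 else 0) - 1/2 * (if j = i + 1 then 1 else 0)"
      using 2 ind_suc[of "i-2"] ind_suc[of "i-1"] ind_suc[of i] s1 unfolding phi1_def Let_def
      by (simp del: Suc_diff_Suc)
    show ?thesis unfolding e using case2[of i "meshJ m" j] 2 J2 j1 jJ by simp
  next
    case 3
    have s1: "meshJ m - 1 = Suc (meshJ m - 2)" "meshJ m = Suc (meshJ m - 1)" using J2 by auto
    have e: "phi1 L m i x = - 1/2 * (if j = i - 1 then 1 else 0) + 3/2 * (if j = i then 1 else 0)"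
      using 3 ind_suc[of "meshJ m-2"] ind_suc[of "meshJ m-1"] s1 unfolding phi1_def Let_def
      by (simp del: Suc_diff_Suc)
    show ?thesis unfolding e using case3[of i "meshJ m" j] 3 J2 j1 jJ by simp
  qed
qed

end


definition cc :: "real \<Rightarrow> nat \<Rightarrow> nat \<Rightarrow> real \<Rightarrow> real" where
  "cc L m k t = sin (om L k * ((t - 1/2) * meshh L m))"
definition AA :: "real \<Rightarrow> nat \<Rightarrow> nat \<Rightarrow> real \<Rightarrow> real" where
  "AA L m k x = (\<Sum>i\<in>{1..meshJ m}. (cc L m k (real i) / (1 - cos (om L k * meshh L m))) * phi1 L m i x)"

lemma sum_delta_real: "finite S \<Longrightarrow> (\<Sum>i\<in>S. f i * (if i = a then 1 else 0)) = (if a \<in> S then f a else (0::real))"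
proof -
  assume S: "finite S"
  have "(\<Sum>i\<in>S. f i * (if i = a then 1 else 0)) = (\<Sum>i\<in>S. if i = a then f i else 0)"
    by (rule sum.cong) auto
  also have "\<dots> = (if a \<in> S then f a else 0)" using S by (rule sum.delta)
  finally show ?thesis .
qed

lemma sin_lip: fixes a b :: real shows "\<bar>sin a - sin b\<bar> \<le> \<bar>a - b\<bar>"
proof -
  have "\<bar>sin a - sin b\<bar> = 2 * \<bar>sin ((a - b) / 2)\<bar> * \<bar>cos ((a + b) / 2)\<bar>"
    by (simp add: sin_diff_sin abs_mult)
  also have "\<dots> \<le> 2 * \<bar>(a - b) / 2\<bar> * 1"
    by (intro mult_mono abs_sin_x_le_abs_x abs_cos_le_one) auto
  finally show ?thesis by simp
qed

lemma sum_cell: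
  assumes L: "L > 0" and j1: "1 \<le> j" and c1: "node L m (j-1) < x" and c2: "x \<le> node L m j"
    and J2: "2 \<le> meshJ m" and jJ: "j \<le> meshJ m"
  shows "(\<Sum>i\<in>{1..meshJ m}. g i * phi1 L m i x) =
     (1 + (if j = 1 then 1/2 else 0) + (if j = meshJ m then 1/2 else 0)) * g j
     - 1/2 * (if j + 1 \<le> meshJ m then g (j+1) else 0) - 1/2 * (if 2 \<le> j then g (j-1) else 0)"
proof -
  define \<alpha> where "\<alpha> = (1 + (if j = 1 then 1/2 else 0) + (if j = meshJ m then 1/2 else (0::real)))"
  define \<beta> where "\<beta> = (if 2 \<le> j then 1 else (0::real))"
  have "(\<Sum>i\<in>{1..meshJ m}. g i * phi1 L m i x) = (\<Sum>i\<in>{1..meshJ m}. \<alpha> * (g i * (if i = j then 1 else 0))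
      - 1/2 * (g i * (if i = j + 1 then 1 else 0)) - 1/2 * \<beta> * (g i * (if i = j - 1 then 1 else 0)))"
    by (rule sum.cong[OF refl]) (simp add: phi_cell[OF L j1 c1 c2 J2 jJ] \<alpha>_def \<beta>_def algebra_simps)
  also have "\<dots> = \<alpha> * (\<Sum>i\<in>{1..meshJ m}. g i * (if i = j then 1 else 0))
      - 1/2 * (\<Sum>i\<in>{1..meshJ m}. g i * (if i = j + 1 then 1 else 0))
      - 1/2 * \<beta> * (\<Sum>i\<in>{1..meshJ m}. g i * (if i = j - 1 then 1 else 0))"
    by (simp add: sum_subtractf sum_distrib_left)
  also have "\<dots> = \<alpha> * g j - 1/2 * (if j + 1 \<le> meshJ m then g (j+1) else 0) - 1/2 * \<beta> * (if j - 1 \<in> {1..meshJ m} then g (j-1) else 0)"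
    by (simp only: sum_delta_real[OF finite_atLeastAtMost]) (use j1 jJ in simp)
  finally show ?thesis using jJ unfolding \<alpha>_def \<beta>_def by auto
qed

lemma AA_cell:
  assumes L: "L > 0" and k: "1 \<le> k" and j1: "1 \<le> j" and c1: "node L m (j-1) < x" and c2: "x \<le> node L m j"
    and J2: "2 \<le> meshJ m" and jJ: "j \<le> meshJ m" and D: "cos (om L k * meshh L m) \<noteq> 1"
  shows "AA L m k x = cc L m k (real j)"
proof -
  define h where "h = meshh L m"
  define w where "w = om L k"
  define D where "D = 1 - cos (w * h)"
  have D0: "D \<noteq> 0" using D by (simp add: D_def w_def h_def)
  have g0: "cc L m k 0 = - cc L m k 1"
  proof -
    have "w * ((0 - 1/2) * h) = - (w * ((1 - 1/2) * h))" by simp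
    then show ?thesis unfolding cc_def w_def[symmetric] h_def[symmetric] by (metis sin_minus)
  qed
  have wJ: "w * (real (meshJ m) * h) = real k * pi"
    using meshhJ[of L m] L by (simp add: w_def h_def om_def field_simps)
  have gJ: "cc L m k (real (meshJ m) + 1) = - cc L m k (real (meshJ m))"
  proof -
    have e1: "w * ((real (meshJ m) + 1 - 1/2) * h) = real k * pi + w * h / 2"
      using wJ by (simp add: algebra_simps)
    have e2: "w * ((real (meshJ m) - 1/2) * h) = real k * pi - w * h / 2"
      using wJ by (simp add: algebra_simps)
    show ?thesis unfolding cc_def w_def[symmetric] h_def[symmetric] e1 e2
      by (simp add: sin_add sin_diff)
  qed
  have trig: "cc L m k (t + 1) + cc L m k (t - 1) = 2 * cos (w * h) * cc L m k t" for t
  proof -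
    have e1: "w * ((t + 1 - 1/2) * h) = w * ((t - 1/2) * h) + w * h" by (simp add: algebra_simps)
    have e2: "w * ((t - 1 - 1/2) * h) = w * ((t - 1/2) * h) - w * h" by (simp add: algebra_simps)
    show ?thesis unfolding cc_def w_def[symmetric] h_def[symmetric] e1 e2
      by (simp add: sin_add sin_diff)
  qed
  have S: "(\<Sum>i\<in>{1..meshJ m}. cc L m k (real i) * phi1 L m i x)
        = cc L m k (real j) - 1/2 * cc L m k (real j + 1) - 1/2 * cc L m k (real j - 1)"
  proof -
    have eq: "(\<Sum>i\<in>{1..meshJ m}. cc L m k (real i) * phi1 L m i x) =
     (1 + (if j = 1 then 1/2 else 0) + (if j = meshJ m then 1/2 else 0)) * cc L m k (real j)
     - 1/2 * (if j + 1 \<le> meshJ m then cc L m k (real (j+1)) else 0) - 1/2 * (if 2 \<le> j then cc L m k (real (j-1)) else 0)"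
      by (rule sum_cell[OF L j1 c1 c2 J2 jJ])
    consider "j = 1" | "j = meshJ m" "2 \<le> j" | "2 \<le> j" "j + 1 \<le> meshJ m" using j1 jJ J2 by linarith
    then show ?thesis
    proof cases
      case 1 then show ?thesis using eq J2 g0 by (auto simp: of_nat_diff)
    next
      case 2 then show ?thesis using eq J2 gJ by (auto simp: of_nat_diff)
    next
      case 3 then show ?thesis using eq J2 by (auto simp: of_nat_diff ac_simps)
    qed
  qed
  have "AA L m k x = (\<Sum>i\<in>{1..meshJ m}. cc L m k (real i) * phi1 L m i x) / D"
    unfolding AA_def D_def w_def h_def by (simp add: sum_divide_distrib)
  also have "\<dots> = cc L m k (real j)"
    using S trig[of "real j"] D0 unfolding D_def by (simp add: field_simps)
  finally show ?thesis .
qed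

lemma AA_approx:
  assumes L: "L > 0" and k: "1 \<le> k" and J2: "2 \<le> meshJ m" and D: "cos (om L k * meshh L m) \<noteq> 1"
    and x: "x \<in> {-L<..L}"
  shows "\<bar>AA L m k x - sn L k x\<bar> \<le> om L k * meshh L m / 2"
proof -
  obtain j where j1: "1 \<le> j" and jJ: "j \<le> meshJ m" and c1: "node L m (j-1) < x" and c2: "x \<le> node L m j"
    using cell_exists[OF L x] by blast
  have w: "om L k > 0" using L k by (simp add: om_def)
  have h: "meshh L m > 0" using meshh_pos[OF L] .
  have "\<bar>AA L m k x - sn L k x\<bar> = \<bar>sin (om L k * ((real j - 1/2) * meshh L m)) - sin (om L k * (x + L))\<bar>"
    using AA_cell[OF L k j1 c1 c2 J2 jJ D] by (simp add: cc_def sn_def)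
  also have "\<dots> \<le> \<bar>om L k * ((real j - 1/2) * meshh L m) - om L k * (x + L)\<bar>" by (rule sin_lip)
  also have "\<dots> = om L k * \<bar>(real j - 1/2) * meshh L m - (x + L)\<bar>"
    using w by (simp add: abs_mult right_diff_distrib[symmetric])
  also have "\<dots> \<le> om L k * (meshh L m / 2)"
  proof (intro mult_left_mono)
    have a: "(real j - 1) * meshh L m < x + L" and b: "x + L \<le> real j * meshh L m"
      using c1 c2 j1 by (auto simp: node_def of_nat_diff)
    show "\<bar>(real j - 1/2) * meshh L m - (x + L)\<bar> \<le> meshh L m / 2"
    proof -
      have a': "real j * meshh L m - meshh L m < x + L" using a by (simp add: left_diff_distrib)
      have e: "(real j - 1/2) * meshh L m = real j * meshh L m - meshh L m / 2" by (simp add: left_diff_distrib)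
      show ?thesis unfolding e abs_le_iff using a' b by auto
    qed
  qed (use w in auto)
  finally show ?thesis by simp
qed

lemma AA_int: "AA L m k integrable_on {a..b}"
  unfolding AA_def by (intro integrable_sum intcm phi1_int) auto

lemma TT_AA:
  assumes L: "L > 0" and x: "x \<in> {-L..L}"
  shows "TT L (AA L m k) x = (\<Sum>i\<in>{1..meshJ m}. (cc L m k (real i) / (1 - cos (om L k * meshh L m))) * psi1 L m i x)"
  unfolding AA_def psi1_TT[OF L]
  by (rule TT_lin) (use x phi1_int in auto)


lemma Vh_zero: "(\<lambda>x. 0) \<in> Vh L m"
  unfolding Vh_def by (rule CollectI, rule exI[of _ "\<lambda>i j. 0"]) simp

lemma Vh_add: "f \<in> Vh L m \<Longrightarrow> g \<in> Vh L m \<Longrightarrow> (\<lambda>x. f x + g x) \<in> Vh L m"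
proof -
  assume "f \<in> Vh L m" "g \<in> Vh L m"
  then obtain c d where f: "f = (\<lambda>x. \<Sum>i1\<in>{1..meshJ m}. \<Sum>i2\<in>{1..meshJ m}. c i1 i2 * bphi L m i1 i2 x)"
    and g: "g = (\<lambda>x. \<Sum>i1\<in>{1..meshJ m}. \<Sum>i2\<in>{1..meshJ m}. d i1 i2 * bphi L m i1 i2 x)"
    unfolding Vh_def by blast
  show ?thesis unfolding Vh_def
    by (rule CollectI, rule exI[of _ "\<lambda>i j. c i j + d i j"])
       (simp add: f g sum.distrib[symmetric] distrib_right)
qed

lemma Vh_scale: "f \<in> Vh L m \<Longrightarrow> (\<lambda>x. a * f x) \<in> Vh L m"
proof -
  assume "f \<in> Vh L m"
  then obtain c where f: "f = (\<lambda>x. \<Sum>i1\<in>{1..meshJ m}. \<Sum>i2\<in>{1..meshJ m}. c i1 i2 * bphi L m i1 i2 x)"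
    unfolding Vh_def by blast
  show ?thesis unfolding Vh_def
    by (rule CollectI, rule exI[of _ "\<lambda>i j. a * c i j"])
       (simp add: f sum_distrib_left mult.assoc)
qed

lemma Vh_tensor:
  assumes h: "meshh L m \<noteq> 0"
  shows "(\<lambda>x. (\<Sum>i\<in>{1..meshJ m}. \<alpha> i * phi1 L m i (fst x)) * (\<Sum>j\<in>{1..meshJ m}. \<beta> j * psi1 L m j (snd x))
     + (\<Sum>i\<in>{1..meshJ m}. \<alpha> i * psi1 L m i (fst x)) * (\<Sum>j\<in>{1..meshJ m}. \<beta> j * phi1 L m j (snd x))) \<in> Vh L m"
proof -
  let ?c = "\<lambda>i j. \<alpha> i * \<beta> j * (2 * (meshh L m)\<^sup>2 / 3)"
  have "(\<lambda>x. \<Sum>i1\<in>{1..meshJ m}. \<Sum>i2\<in>{1..meshJ m}. ?c i1 i2 * bphi L m i1 i2 x) \<in> Vh L m"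
    unfolding Vh_def by (rule CollectI, rule exI[of _ ?c]) simp
  moreover have "(\<lambda>x. \<Sum>i1\<in>{1..meshJ m}. \<Sum>i2\<in>{1..meshJ m}. ?c i1 i2 * bphi L m i1 i2 x) =
    (\<lambda>x. (\<Sum>i\<in>{1..meshJ m}. \<alpha> i * phi1 L m i (fst x)) * (\<Sum>j\<in>{1..meshJ m}. \<beta> j * psi1 L m j (snd x))
     + (\<Sum>i\<in>{1..meshJ m}. \<alpha> i * psi1 L m i (fst x)) * (\<Sum>j\<in>{1..meshJ m}. \<beta> j * phi1 L m j (snd x)))"
  proof
    fix x
    have e: "?c i1 i2 * bphi L m i1 i2 x = (\<alpha> i1 * phi1 L m i1 (fst x)) * (\<beta> i2 * psi1 L m i2 (snd x))
       + (\<alpha> i1 * psi1 L m i1 (fst x)) * (\<beta> i2 * phi1 L m i2 (snd x))" for i1 i2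
      using h by (simp add: bphi_def power2_eq_square field_simps)
    show "(\<Sum>i1\<in>{1..meshJ m}. \<Sum>i2\<in>{1..meshJ m}. ?c i1 i2 * bphi L m i1 i2 x) =
      (\<Sum>i\<in>{1..meshJ m}. \<alpha> i * phi1 L m i (fst x)) * (\<Sum>j\<in>{1..meshJ m}. \<beta> j * psi1 L m j (snd x))
     + (\<Sum>i\<in>{1..meshJ m}. \<alpha> i * psi1 L m i (fst x)) * (\<Sum>j\<in>{1..meshJ m}. \<beta> j * phi1 L m j (snd x))"
      unfolding e by (simp add: sum.distrib sum_product)
  qed
  ultimately show ?thesis by simp
qed

definition good :: "real \<Rightarrow> (real \<times> real \<Rightarrow> real) \<Rightarrow> bool" where
  "good L g \<longleftrightarrow> (\<forall>e>0. \<exists>M. \<forall>m\<ge>M. \<exists>vh\<in>Vh L m. \<forall>x\<in>dom2 L. \<bar>g x - vh x\<bar> \<le> e)"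

lemma good_zero: "good L (\<lambda>x. 0)"
  unfolding good_def
  by (intro allI impI exI[of _ 0] bexI[OF _ Vh_zero]) auto

lemma good_add:
  assumes f: "good L f" and g: "good L g"
  shows "good L (\<lambda>x. f x + g x)"
  unfolding good_def
proof (intro allI impI)
  fix e :: real assume e: "e > 0"
  obtain M1 where M1: "\<forall>m\<ge>M1. \<exists>vh\<in>Vh L m. \<forall>x\<in>dom2 L. \<bar>f x - vh x\<bar> \<le> e/2"
    using f e unfolding good_def by (meson half_gt_zero)
  obtain M2 where M2: "\<forall>m\<ge>M2. \<exists>vh\<in>Vh L m. \<forall>x\<in>dom2 L. \<bar>g x - vh x\<bar> \<le> e/2"
    using g e unfolding good_def by (meson half_gt_zero)
  show "\<exists>M. \<forall>m\<ge>M. \<exists>vh\<in>Vh L m. \<forall>x\<in>dom2 L. \<bar>f x + g x - vh x\<bar> \<le> e"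
  proof (intro exI allI impI)
    fix m assume m: "max M1 M2 \<le> m"
    obtain v1 where v1: "v1 \<in> Vh L m" "\<forall>x\<in>dom2 L. \<bar>f x - v1 x\<bar> \<le> e/2"
      using M1 m by (meson max.boundedE)
    obtain v2 where v2: "v2 \<in> Vh L m" "\<forall>x\<in>dom2 L. \<bar>g x - v2 x\<bar> \<le> e/2"
      using M2 m by (meson max.boundedE)
    show "\<exists>vh\<in>Vh L m. \<forall>x\<in>dom2 L. \<bar>f x + g x - vh x\<bar> \<le> e"
    proof (intro bexI ballI)
      fix x assume x: "x \<in> dom2 L"
      have a: "\<bar>f x - v1 x\<bar> \<le> e/2" and b: "\<bar>g x - v2 x\<bar> \<le> e/2" using v1(2) v2(2) x by auto
      show "\<bar>f x + g x - (v1 x + v2 x)\<bar> \<le> e" using a b unfolding abs_le_iff by linarith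
    qed (rule Vh_add[OF v1(1) v2(1)])
  qed
qed

lemma good_scale:
  assumes f: "good L f"
  shows "good L (\<lambda>x. a * f x)"
  unfolding good_def
proof (intro allI impI)
  fix e :: real assume e: "e > 0"
  have e': "e / (\<bar>a\<bar> + 1) > 0" using e by simp
  obtain M where M: "\<forall>m\<ge>M. \<exists>vh\<in>Vh L m. \<forall>x\<in>dom2 L. \<bar>f x - vh x\<bar> \<le> e / (\<bar>a\<bar> + 1)"
    using f e' unfolding good_def by blast
  show "\<exists>M. \<forall>m\<ge>M. \<exists>vh\<in>Vh L m. \<forall>x\<in>dom2 L. \<bar>a * f x - vh x\<bar> \<le> e"
  proof (intro exI allI impI)
    fix m assume "M \<le> m"
    then obtain v where v: "v \<in> Vh L m" "\<forall>x\<in>dom2 L. \<bar>f x - v x\<bar> \<le> e / (\<bar>a\<bar> + 1)" using M by auto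
    show "\<exists>vh\<in>Vh L m. \<forall>x\<in>dom2 L. \<bar>a * f x - vh x\<bar> \<le> e"
    proof (intro bexI ballI)
      fix x assume x: "x \<in> dom2 L"
      have "\<bar>a * f x - a * v x\<bar> = \<bar>a\<bar> * \<bar>f x - v x\<bar>" by (simp add: abs_mult right_diff_distrib[symmetric])
      also have "\<dots> \<le> (\<bar>a\<bar> + 1) * (e / (\<bar>a\<bar> + 1))"
        using v(2) x by (intro mult_mono) auto
      also have "\<dots> = e" by simp
      finally show "\<bar>a * f x - a * v x\<bar> \<le> e" .
    qed (rule Vh_scale[OF v(1)])
  qed
qed

lemma good_approx:
  assumes H: "\<And>e. e > 0 \<Longrightarrow> \<exists>g'. good L g' \<and> (\<forall>x\<in>dom2 L. \<bar>g x - g' x\<bar> \<le> e)"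
  shows "good L g"
  unfolding good_def
proof (intro allI impI)
  fix e :: real assume e: "e > 0"
  obtain g' where g': "good L g'" "\<forall>x\<in>dom2 L. \<bar>g x - g' x\<bar> \<le> e/2" using H[of "e/2"] e by auto
  obtain M where M: "\<forall>m\<ge>M. \<exists>vh\<in>Vh L m. \<forall>x\<in>dom2 L. \<bar>g' x - vh x\<bar> \<le> e/2"
    using g'(1) e unfolding good_def by (meson half_gt_zero)
  show "\<exists>M. \<forall>m\<ge>M. \<exists>vh\<in>Vh L m. \<forall>x\<in>dom2 L. \<bar>g x - vh x\<bar> \<le> e"
  proof (intro exI allI impI)
    fix m assume "M \<le> m"
    then obtain v where v: "v \<in> Vh L m" "\<forall>x\<in>dom2 L. \<bar>g' x - v x\<bar> \<le> e/2" using M by auto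
    show "\<exists>vh\<in>Vh L m. \<forall>x\<in>dom2 L. \<bar>g x - vh x\<bar> \<le> e"
    proof (intro bexI ballI)
      fix x assume x: "x \<in> dom2 L"
      have a: "\<bar>g' x - v x\<bar> \<le> e/2" and b: "\<bar>g x - g' x\<bar> \<le> e/2" using v(2) g'(2) x by auto
      show "\<bar>g x - v x\<bar> \<le> e" using a b unfolding abs_le_iff by linarith
    qed (rule v(1))
  qed
qed

lemma mesh_small:
  assumes L: "L > 0" and eta: "\<eta> > 0"
  shows "\<exists>M. \<forall>m\<ge>M. meshh L m \<le> \<eta> \<and> 2 \<le> meshJ m"
proof -
  obtain n where n: "2 * L / \<eta> < 2 ^ n" using real_arch_pow[of 2 "2 * L / \<eta>"] by auto
  show ?thesis
  proof (intro exI allI impI conjI)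
    fix m assume m: "max n 1 \<le> m"
    have "(2::real) ^ n \<le> 2 ^ m" using m by (intro power_increasing) auto
    then have "2 * L / \<eta> < 2 ^ m" using n by linarith
    then show "meshh L m \<le> \<eta>" using eta L by (simp add: meshh_def meshJ_def field_simps)
    have "(2::nat) ^ 1 \<le> 2 ^ m" using m by (intro power_increasing) auto
    then show "2 \<le> meshJ m" by (simp add: meshJ_def)
  qed
qed

lemma prod_err:
  fixes a a' b b' :: real
  assumes "\<bar>a - a'\<bar> \<le> e1" "\<bar>b - b'\<bar> \<le> e2" "\<bar>b\<bar> \<le> B" "\<bar>a'\<bar> \<le> A"
  shows "\<bar>a * b - a' * b'\<bar> \<le> e1 * B + A * e2"
proof -
  have "a * b - a' * b' = (a - a') * b + a' * (b - b')" by (simp add: algebra_simps)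
  then have "\<bar>a * b - a' * b'\<bar> \<le> \<bar>a - a'\<bar> * \<bar>b\<bar> + \<bar>a'\<bar> * \<bar>b - b'\<bar>"
    by (simp add: abs_mult[symmetric] abs_triangle_ineq)
  also have "\<dots> \<le> e1 * B + A * e2"
    using assms by (intro add_mono mult_mono) auto
  finally show ?thesis .
qed


lemma dom2_memD: "x \<in> dom2 L \<Longrightarrow> fst x \<in> {-L<..<L} \<and> snd x \<in> {-L<..<L}"
  by (auto simp: dom2_def)

lemma good_sin:
  assumes L: "L > 0" and k: "1 \<le> k" and l: "1 \<le> l"
  shows "good L (\<lambda>x. sn L k (fst x) * sn L l (snd x))"
  unfolding good_def
proof (intro allI impI)
  fix e :: real assume e: "e > 0"
  define wk where "wk = om L k"
  define wl where "wl = om L l"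
  have wk: "wk > 0" using L k by (simp add: wk_def om_def)
  have wl: "wl > 0" using L l by (simp add: wl_def om_def)
  define \<mu> where "\<mu> = 1 / wk^2 + 1 / wl^2"
  have \<mu>: "\<mu> > 0" using wk wl by (simp add: \<mu>_def add_pos_pos)
  define C where "C = 1 / wl^2 + 1 / wk^2 + 32 * L^2"
  have C: "C > 0" using wk wl L by (simp add: C_def add_pos_pos)
  define \<eta> where "\<eta> = min (min 1 (pi/2)) (e * \<mu> / C)"
  have \<eta>: "\<eta> > 0" using e \<mu> C by (simp add: \<eta>_def)
  have \<eta>1: "\<eta> \<le> 1" "\<eta> \<le> pi/2" "\<eta> \<le> e * \<mu> / C" unfolding \<eta>_def by linarith+
  obtain M where M: "\<forall>m\<ge>M. meshh L m \<le> 2 * \<eta> / (wk + wl) \<and> 2 \<le> meshJ m"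
    using mesh_small[OF L, of "2 * \<eta> / (wk + wl)"] \<eta> wk wl by auto
  show "\<exists>M. \<forall>m\<ge>M. \<exists>vh\<in>Vh L m. \<forall>x\<in>dom2 L. \<bar>sn L k (fst x) * sn L l (snd x) - vh x\<bar> \<le> e"
  proof (intro exI allI impI)
    fix m assume m: "M \<le> m"
    define h where "h = meshh L m"
    have h: "h > 0" using meshh_pos[OF L] by (simp add: h_def)
    have hle: "h \<le> 2 * \<eta> / (wk + wl)" and J2: "2 \<le> meshJ m" using M m by (auto simp: h_def)
    have ek: "wk * h / 2 \<le> \<eta>"
    proof -
      have "wk * h \<le> wk * (2 * \<eta> / (wk + wl))" using hle wk by (intro mult_left_mono) auto
      also have "\<dots> \<le> 2 * \<eta>" using wk wl \<eta> by (simp add: field_simps)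
      finally show ?thesis by simp
    qed
    have el: "wl * h / 2 \<le> \<eta>"
    proof -
      have "wl * h \<le> wl * (2 * \<eta> / (wk + wl))" using hle wl by (intro mult_left_mono) auto
      also have "\<dots> \<le> 2 * \<eta>" using wk wl \<eta> by (simp add: field_simps)
      finally show ?thesis by simp
    qed
    have Dk: "cos (om L k * meshh L m) \<noteq> 1"
    proof -
      have "cos (wk * h) < cos 0" using ek \<eta>1 wk h by (intro cos_monotone_0_pi) auto
      then show ?thesis by (simp add: wk_def h_def)
    qed
    have Dl: "cos (om L l * meshh L m) \<noteq> 1"
    proof -
      have "cos (wl * h) < cos 0" using el \<eta>1 wl h by (intro cos_monotone_0_pi) auto
      then show ?thesis by (simp add: wl_def h_def)
    qed
    define A where "A = AA L m k"
    define B where "B = AA L m l"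
    have Aap: "\<bar>A t - sn L k t\<bar> \<le> \<eta>" if "t \<in> {-L<..L}" for t
      using AA_approx[OF L k J2 Dk that] ek by (simp add: A_def wk_def h_def)
    have Bap: "\<bar>B t - sn L l t\<bar> \<le> \<eta>" if "t \<in> {-L<..L}" for t
      using AA_approx[OF L l J2 Dl that] el by (simp add: B_def wl_def h_def)
    have TAap: "\<bar>TT L (sn L k) t - TT L A t\<bar> \<le> 8 * L^2 * \<eta>" if "t \<in> {-L..L}" for t
    proof -
      have "TT L (sn L k) t - TT L A t = TT L (\<lambda>s. sn L k s - A s) t"
        using TT_diff[OF sn_int AA_int that] by (simp add: A_def)
      also have "\<bar>\<dots>\<bar> \<le> 8 * L^2 * \<eta>"
        by (rule TT_bound[OF L]) (use Aap in \<open>auto intro!: integrable_diff sn_int simp: A_def AA_int abs_minus_commute\<close>)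
      finally show ?thesis .
    qed
    have TBap: "\<bar>TT L (sn L l) t - TT L B t\<bar> \<le> 8 * L^2 * \<eta>" if "t \<in> {-L..L}" for t
    proof -
      have "TT L (sn L l) t - TT L B t = TT L (\<lambda>s. sn L l s - B s) t"
        using TT_diff[OF sn_int AA_int that] by (simp add: B_def)
      also have "\<bar>\<dots>\<bar> \<le> 8 * L^2 * \<eta>"
        by (rule TT_bound[OF L]) (use Bap in \<open>auto intro!: integrable_diff sn_int simp: B_def AA_int abs_minus_commute\<close>)
      finally show ?thesis .
    qed
    define \<alpha> where "\<alpha> i = cc L m k (real i) / (1 - cos (om L k * meshh L m))" for i
    define \<beta> where "\<beta> i = cc L m l (real i) / (1 - cos (om L l * meshh L m))" for i
    define vh where "vh x = (1/\<mu>) * ((\<Sum>i\<in>{1..meshJ m}. \<alpha> i * phi1 L m i (fst x)) * (\<Sum>j\<in>{1..meshJ m}. \<beta> j * psi1 L m j (snd x))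
     + (\<Sum>i\<in>{1..meshJ m}. \<alpha> i * psi1 L m i (fst x)) * (\<Sum>j\<in>{1..meshJ m}. \<beta> j * phi1 L m j (snd x)))" for x
    have vhV: "vh \<in> Vh L m"
      unfolding vh_def[abs_def] using h by (intro Vh_scale Vh_tensor) (simp add: h_def)
    show "\<exists>vh\<in>Vh L m. \<forall>x\<in>dom2 L. \<bar>sn L k (fst x) * sn L l (snd x) - vh x\<bar> \<le> e"
    proof (intro bexI[OF _ vhV] ballI)
      fix x assume x: "x \<in> dom2 L"
      define x1 where "x1 = fst x"
      define x2 where "x2 = snd x"
      have x1: "x1 \<in> {-L<..<L}" and x2: "x2 \<in> {-L<..<L}" using dom2_memD[OF x] by (auto simp: x1_def x2_def)
      have s1: "(\<Sum>i\<in>{1..meshJ m}. \<alpha> i * phi1 L m i x1) = A x1" by (simp add: A_def AA_def \<alpha>_def)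
      have s2: "(\<Sum>i\<in>{1..meshJ m}. \<beta> i * phi1 L m i x2) = B x2" by (simp add: B_def AA_def \<beta>_def)
      have s3: "(\<Sum>i\<in>{1..meshJ m}. \<alpha> i * psi1 L m i x1) = TT L A x1"
        using TT_AA[OF L, of x1 m k] x1 by (simp add: A_def \<alpha>_def)
      have s4: "(\<Sum>i\<in>{1..meshJ m}. \<beta> i * psi1 L m i x2) = TT L B x2"
        using TT_AA[OF L, of x2 m l] x2 by (simp add: B_def \<beta>_def)
      have vhx: "vh x = (1/\<mu>) * (A x1 * TT L B x2 + TT L A x1 * B x2)"
        unfolding vh_def x1_def[symmetric] x2_def[symmetric] s1 s2 s3 s4 ..
      have tg: "sn L k x1 * sn L l x2 = (1/\<mu>) * (sn L k x1 * TT L (sn L l) x2 + TT L (sn L k) x1 * sn L l x2)"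
        using TT_sn[OF L k, of x1] TT_sn[OF L l, of x2] x1 x2 \<mu>
        by (simp add: \<mu>_def wk_def wl_def field_simps)
      have snb: "\<bar>sn L k t\<bar> \<le> 1" "\<bar>sn L l t\<bar> \<le> 1" for t by (simp_all add: sn_def)
      have TSl: "\<bar>TT L (sn L l) x2\<bar> \<le> 1 / wl^2"
        using TT_sn[OF L l, of x2] x2 snb(2)[of x2] wl by (simp add: wl_def abs_div divide_right_mono)
      have TSk: "\<bar>TT L (sn L k) x1\<bar> \<le> 1 / wk^2"
        using TT_sn[OF L k, of x1] x1 snb(1)[of x1] wk by (simp add: wk_def abs_div divide_right_mono)
      have Ab: "\<bar>A x1\<bar> \<le> 2" using Aap[of x1] x1 snb(1)[of x1] \<eta>1 unfolding abs_le_iff by auto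
      have Bb: "\<bar>B x2\<bar> \<le> 2" using Bap[of x2] x2 snb(2)[of x2] \<eta>1 unfolding abs_le_iff by auto
      have e1: "\<bar>sn L k x1 * TT L (sn L l) x2 - A x1 * TT L B x2\<bar> \<le> \<eta> * (1 / wl^2) + 2 * (8 * L^2 * \<eta>)"
        by (rule prod_err) (use Aap[of x1] x1 TBap[of x2] x2 TSl Ab in \<open>auto simp: abs_minus_commute\<close>)
      have e2: "\<bar>sn L l x2 * TT L (sn L k) x1 - B x2 * TT L A x1\<bar> \<le> \<eta> * (1 / wk^2) + 2 * (8 * L^2 * \<eta>)"
        by (rule prod_err) (use Bap[of x2] x2 TAap[of x1] x1 TSk Bb in \<open>auto simp: abs_minus_commute\<close>)
      have "\<bar>sn L k x1 * sn L l x2 - vh x\<bar> = (1/\<mu>) * \<bar>(sn L k x1 * TT L (sn L l) x2 - A x1 * TT L B x2)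
          + (sn L l x2 * TT L (sn L k) x1 - B x2 * TT L A x1)\<bar>"
      proof -
        have eq: "sn L k x1 * sn L l x2 - vh x = (1/\<mu>) * ((sn L k x1 * TT L (sn L l) x2 - A x1 * TT L B x2)
          + (sn L l x2 * TT L (sn L k) x1 - B x2 * TT L A x1))"
          unfolding tg vhx by (simp add: algebra_simps)
        show ?thesis unfolding eq using \<mu> by (simp add: abs_mult)
      qed
      also have "\<dots> \<le> (1/\<mu>) * ((\<eta> * (1 / wl^2) + 2 * (8 * L^2 * \<eta>)) + (\<eta> * (1 / wk^2) + 2 * (8 * L^2 * \<eta>)))"
        using e1 e2 \<mu> by (intro mult_left_mono order.trans[OF abs_triangle_ineq add_mono]) auto
      also have "\<dots> = (1/\<mu>) * (\<eta> * C)" by (simp add: C_def algebra_simps)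
      also have "\<dots> \<le> (1/\<mu>) * ((e * \<mu> / C) * C)"
        using \<eta>1(3) C \<mu> by (intro mult_left_mono mult_right_mono) auto
      also have "\<dots> = e" using C \<mu> by simp
      finally show "\<bar>sn L k (fst x) * sn L l (snd x) - vh x\<bar> \<le> e" by (simp add: x1_def x2_def)
    qed
  qed
qed


definition th :: "real \<Rightarrow> real \<Rightarrow> real" where "th L t = pi * (t + L) / (2 * L)"

lemma sn_th: "sn L k t = sin (real k * th L t)"
  by (simp add: sn_def om_def th_def mult.assoc)

inductive_set SS :: "(real \<Rightarrow> real) set" where
  SS_sin: "(\<lambda>t. sin (real k * t)) \<in> SS"
| SS_add: "f \<in> SS \<Longrightarrow> g \<in> SS \<Longrightarrow> (\<lambda>t. f t + g t) \<in> SS"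
| SS_scale: "f \<in> SS \<Longrightarrow> (\<lambda>t. c * f t) \<in> SS"

lemma SS_mult_cos: "f \<in> SS \<Longrightarrow> (\<lambda>t. f t * cos t) \<in> SS"
proof (induction rule: SS.induct)
  case (SS_sin k)
  show ?case
  proof (cases "k = 0")
    case True
    have "(\<lambda>t. 0 * sin (real 0 * t)) \<in> SS" by (rule SS.SS_scale[OF SS.SS_sin])
    then show ?thesis using True by simp
  next
    case False
    have "(\<lambda>t. (1/2) * sin (real (k+1) * t) + (1/2) * sin (real (k-1) * t)) \<in> SS"
      by (intro SS.SS_add SS.SS_scale SS.SS_sin)
    moreover have "(\<lambda>t. (1/2) * sin (real (k+1) * t) + (1/2) * sin (real (k-1) * t)) = (\<lambda>t. sin (real k * t) * cos t)"
    proof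
      fix t
      have "sin (real k * t) * cos t = (sin (real k * t + t) + sin (real k * t - t)) / 2" by (rule sin_times_cos)
      also have "\<dots> = (1/2) * sin (real (k+1) * t) + (1/2) * sin (real (k-1) * t)"
        using False by (simp add: of_nat_diff algebra_simps)
      finally show "(1/2) * sin (real (k+1) * t) + (1/2) * sin (real (k-1) * t) = sin (real k * t) * cos t" by simp
    qed
    ultimately show ?thesis by simp
  qed
next
  case (SS_add f g)
  have "(\<lambda>t. f t * cos t + g t * cos t) \<in> SS" by (rule SS.SS_add[OF SS_add.IH])
  then show ?case by (simp add: distrib_right)
next
  case (SS_scale f c)
  have "(\<lambda>t. c * (f t * cos t)) \<in> SS" by (rule SS.SS_scale[OF SS_scale.IH])
  then show ?case by (simp add: mult.assoc)
qed

lemma SS_sin_cos_pow: "(\<lambda>t. sin t * cos t ^ i) \<in> SS"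
proof (induction i)
  case 0
  have "(\<lambda>t. sin (real 1 * t)) \<in> SS" by (rule SS.SS_sin)
  then show ?case by simp
next
  case (Suc i)
  have "(\<lambda>t. sin t * cos t ^ i * cos t) \<in> SS" by (rule SS_mult_cos[OF Suc.IH])
  then show ?case by (simp add: mult.assoc mult.commute[of "cos _ ^ i" "cos _"])
qed

lemma good_SS:
  assumes L: "L > 0" and a: "a \<in> SS" and b: "b \<in> SS"
  shows "good L (\<lambda>x. a (th L (fst x)) * b (th L (snd x)))"
  using a
proof (induction rule: SS.induct)
  case (SS_sin k)
  show ?case using b
  proof (induction rule: SS.induct)
    case (SS_sin l)
    show ?case
    proof (cases "k = 0 \<or> l = 0")
      case True
      then show ?thesis using good_zero[of L] by auto
    next
      case False
      then have "good L (\<lambda>x. sn L k (fst x) * sn L l (snd x))" using good_sin[OF L, of k l] by auto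
      then show ?thesis by (simp add: sn_th)
    qed
  next
    case (SS_add f g)
    have "good L (\<lambda>x. sin (real k * th L (fst x)) * f (th L (snd x)) + sin (real k * th L (fst x)) * g (th L (snd x)))"
      by (rule good_add[OF SS_add.IH])
    then show ?case by (simp add: distrib_left)
  next
    case (SS_scale f c)
    have "good L (\<lambda>x. c * (sin (real k * th L (fst x)) * f (th L (snd x))))"
      by (rule good_scale[OF SS_scale.IH])
    then show ?case by (simp add: ac_simps)
  qed
next
  case (SS_add f g)
  have "good L (\<lambda>x. f (th L (fst x)) * b (th L (snd x)) + g (th L (fst x)) * b (th L (snd x)))"
    by (rule good_add[OF SS_add.IH])
  then show ?case by (simp add: distrib_right)
next
  case (SS_scale f c)
  have "good L (\<lambda>x. c * (f (th L (fst x)) * b (th L (snd x))))"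
    by (rule good_scale[OF SS_scale.IH])
  then show ?case by (simp add: ac_simps)
qed

inductive_set MS :: "real \<Rightarrow> (real \<times> real \<Rightarrow> real) set" for L where
  MS_mono: "(\<lambda>x. cos (th L (fst x)) ^ i * cos (th L (snd x)) ^ j) \<in> MS L"
| MS_add: "f \<in> MS L \<Longrightarrow> g \<in> MS L \<Longrightarrow> (\<lambda>x. f x + g x) \<in> MS L"
| MS_scale: "f \<in> MS L \<Longrightarrow> (\<lambda>x. c * f x) \<in> MS L"

lemma MS_mult_mono: "f \<in> MS L \<Longrightarrow> (\<lambda>x. f x * (cos (th L (fst x)) ^ i * cos (th L (snd x)) ^ j)) \<in> MS L"
proof (induction rule: MS.induct)
  case (MS_mono i' j')
  have "(\<lambda>x. cos (th L (fst x)) ^ (i' + i) * cos (th L (snd x)) ^ (j' + j)) \<in> MS L" by (rule MS.MS_mono)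
  then show ?case by (simp add: power_add ac_simps)
next
  case (MS_add f g)
  then show ?case using MS.MS_add[OF MS_add.IH] by (simp add: distrib_right)
next
  case (MS_scale f c)
  then show ?case using MS.MS_scale[OF MS_scale.IH, of c] by (simp add: ac_simps)
qed

lemma MS_mult: "f \<in> MS L \<Longrightarrow> g \<in> MS L \<Longrightarrow> (\<lambda>x. f x * g x) \<in> MS L"
proof -
  assume f: "f \<in> MS L" and g: "g \<in> MS L"
  show ?thesis using g
  proof (induction rule: MS.induct)
    case (MS_mono i j)
    then show ?case using MS_mult_mono[OF f] by simp
  next
    case (MS_add g1 g2)
    then show ?case using MS.MS_add[OF MS_add.IH] by (simp add: distrib_left)
  next
    case (MS_scale g c)
    then show ?case using MS.MS_scale[OF MS_scale.IH, of c] by (simp add: ac_simps)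
  qed
qed

lemma MS_const: "(\<lambda>x. c) \<in> MS L"
  using MS.MS_scale[OF MS.MS_mono[of L 0 0], of c] by simp

lemma MS_cont: assumes L: "L > 0" shows "f \<in> MS L \<Longrightarrow> continuous_on S f"
  by (induction rule: MS.induct) (use L in \<open>auto simp: th_def intro!: continuous_intros\<close>)

definition SP :: "real \<Rightarrow> real \<times> real \<Rightarrow> real" where
  "SP L x = sin (th L (fst x)) * sin (th L (snd x))"

lemma good_MS: assumes L: "L > 0" shows "f \<in> MS L \<Longrightarrow> good L (\<lambda>x. SP L x * f x)"
proof (induction rule: MS.induct)
  case (MS_mono i j)
  have "good L (\<lambda>x. (\<lambda>t. sin t * cos t ^ i) (th L (fst x)) * (\<lambda>t. sin t * cos t ^ j) (th L (snd x)))"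
    by (rule good_SS[OF L SS_sin_cos_pow SS_sin_cos_pow])
  then show ?case by (simp add: SP_def ac_simps)
next
  case (MS_add f g)
  have "good L (\<lambda>x. SP L x * f x + SP L x * g x)" by (rule good_add[OF MS_add.IH])
  then show ?case by (simp add: distrib_left)
next
  case (MS_scale f c)
  have "good L (\<lambda>x. c * (SP L x * f x))" by (rule good_scale[OF MS_scale.IH])
  then show ?case by (simp add: ac_simps)
qed


lemma th_eq: "th L t = pi * ((t + L) / (2 * L))" by (simp add: th_def)

lemma th_range: "L > 0 \<Longrightarrow> t \<in> {-L..L} \<Longrightarrow> th L t \<in> {0..pi}"
proof -
  assume L: "L > 0" and t: "t \<in> {-L..L}"
  have q: "0 \<le> (t + L) / (2 * L)" "(t + L) / (2 * L) \<le> 1" using L t by (auto simp: field_simps)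
  have b: "pi * ((t + L) / (2 * L)) \<le> pi * 1" using q by (intro mult_left_mono) auto
  have a: "0 \<le> pi * ((t + L) / (2 * L))" using q by (intro mult_nonneg_nonneg) auto
  show ?thesis using a b by (simp add: th_eq)
qed

lemma fr: assumes L: "L > 0" shows "function_ring_on (MS L) ({-L..L} \<times> {-L..L})"
proof unfold_locales
  show "compact ({-L..L} \<times> {-L..L})" by (intro compact_Times compact_Icc)
  show "continuous_on ({-L..L} \<times> {-L..L}) f" if "f \<in> MS L" for f using MS_cont[OF L that] .
  show "(\<lambda>x. f x + g x) \<in> MS L" if "f \<in> MS L" "g \<in> MS L" for f g using MS.MS_add[OF that] .
  show "(\<lambda>x. f x * g x) \<in> MS L" if "f \<in> MS L" "g \<in> MS L" for f g using MS_mult[OF that] .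
  show "(\<lambda>_. c) \<in> MS L" for c by (rule MS_const)
  have inj: "a = b" if ab: "cos (th L a) = cos (th L b)" and a: "a \<in> {-L..L}" and b: "b \<in> {-L..L}" for a b
  proof -
    have ra: "0 \<le> th L a" "th L a \<le> pi" using th_range[OF L a] by auto
    have rb: "0 \<le> th L b" "th L b \<le> pi" using th_range[OF L b] by auto
    have "th L a = th L b" using cos_inj_pi[OF ra rb ab] .
    then have "pi * (a + L) = pi * (b + L)" using L unfolding th_def by (simp add: divide_cancel_right)
    then show "a = b" by simp
  qed
  show "\<exists>f\<in>MS L. f x \<noteq> f y" if xy: "x \<in> {-L..L} \<times> {-L..L}" "y \<in> {-L..L} \<times> {-L..L}" "x \<noteq> y" for x y
  proof -
    have fx: "fst x \<in> {-L..L}" "snd x \<in> {-L..L}" using xy(1) by (simp_all add: mem_Times_iff)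
    have fy: "fst y \<in> {-L..L}" "snd y \<in> {-L..L}" using xy(2) by (simp_all add: mem_Times_iff)
    show ?thesis
    proof (cases "fst x = fst y")
      case False
      have c: "cos (th L (fst x)) \<noteq> cos (th L (fst y))"
      proof
        assume "cos (th L (fst x)) = cos (th L (fst y))"
        then have "fst x = fst y" using inj fx fy by blast
        then show False using False by simp
      qed
      show ?thesis
      proof (rule bexI)
        show "(\<lambda>z. cos (th L (fst z)) ^ 1 * cos (th L (snd z)) ^ 0) \<in> MS L" by (rule MS.MS_mono)
        show "(\<lambda>z. cos (th L (fst z)) ^ 1 * cos (th L (snd z)) ^ 0) x \<noteq> (\<lambda>z. cos (th L (fst z)) ^ 1 * cos (th L (snd z)) ^ 0) y"
          using c by simp
      qed
    next
      case True
      then have F: "snd x \<noteq> snd y" using xy(3) by (simp add: prod_eq_iff)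
      have c: "cos (th L (snd x)) \<noteq> cos (th L (snd y))"
      proof
        assume "cos (th L (snd x)) = cos (th L (snd y))"
        then have "snd x = snd y" using inj fx fy by blast
        then show False using F by simp
      qed
      show ?thesis
      proof (rule bexI)
        show "(\<lambda>z. cos (th L (fst z)) ^ 0 * cos (th L (snd z)) ^ 1) \<in> MS L" by (rule MS.MS_mono)
        show "(\<lambda>z. cos (th L (fst z)) ^ 0 * cos (th L (snd z)) ^ 1) x \<noteq> (\<lambda>z. cos (th L (fst z)) ^ 0 * cos (th L (snd z)) ^ 1) y"
          using c by simp
      qed
    qed
  qed
qed

lemma sin_lower:
  fixes a x :: real
  assumes "0 \<le> a" "a \<le> pi/2" "a \<le> x" "x \<le> pi - a"
  shows "sin a \<le> sin x"
proof (cases "x \<le> pi/2")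
  case True then show ?thesis using assms by (intro sin_monotone_2pi_le) auto
next
  case False
  have "sin a \<le> sin (pi - x)" using assms False by (intro sin_monotone_2pi_le) auto
  then show ?thesis by simp
qed

lemma good_cont:
  assumes L: "L > 0" and d: "0 < d" "d < L" and g: "continuous_on UNIV g"
    and supp: "\<And>x. \<not> (fst x \<in> {-L+d..L-d} \<and> snd x \<in> {-L+d..L-d}) \<Longrightarrow> g x = 0"
  shows "good L g"
proof -
  define a where "a = pi * d / (2 * L)"
  have a: "0 < a" "a < pi/2" using L d by (auto simp: a_def field_simps)
  define s0 where "s0 = sin a"
  have s0: "s0 > 0" using a by (simp add: s0_def sin_gt_zero)
  define c0 where "c0 = s0 * s0"
  have c0: "c0 > 0" using s0 by (simp add: c0_def)
  have sl: "s0 \<le> sin (th L t)" if "t \<in> {-L+d..L-d}" for t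
  proof -
    have q1: "d / (2 * L) \<le> (t + L) / (2 * L)" using that L by (intro divide_right_mono) auto
    have "(t + L) / (2 * L) \<le> (2 * L - d) / (2 * L)" using that L by (intro divide_right_mono) auto
    also have "(2 * L - d) / (2 * L) = 1 - d / (2 * L)" using L by (simp add: diff_divide_distrib)
    finally have q2: "(t + L) / (2 * L) \<le> 1 - d / (2 * L)" .
    have "pi * (d / (2 * L)) \<le> pi * ((t + L) / (2 * L))" using q1 by (intro mult_left_mono) auto
    moreover have "pi * ((t + L) / (2 * L)) \<le> pi * (1 - d / (2 * L))" using q2 by (intro mult_left_mono) auto
    ultimately have "a \<le> th L t" "th L t \<le> pi - a" unfolding th_eq a_def by (auto simp: right_diff_distrib)
    then show ?thesis unfolding s0_def using a by (intro sin_lower) auto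
  qed
  have SPin: "c0 \<le> SP L x" if "fst x \<in> {-L+d..L-d}" "snd x \<in> {-L+d..L-d}" for x
    unfolding c0_def SP_def using sl[OF that(1)] sl[OF that(2)] s0 by (intro mult_mono) auto
  define hf where "hf x = g x / max (SP L x) c0" for x
  have hfc: "continuous_on UNIV hf"
    unfolding hf_def[abs_def] SP_def th_def using c0 L
    by (intro continuous_intros g) auto
  have gh: "g x = SP L x * hf x" for x
  proof (cases "fst x \<in> {-L+d..L-d} \<and> snd x \<in> {-L+d..L-d}")
    case True
    then have "c0 \<le> SP L x" using SPin by auto
    then show ?thesis using c0 by (simp add: hf_def max_def)
  next
    case False then show ?thesis using supp[OF False] by (simp add: hf_def)
  qed
  show ?thesis
  proof (rule good_approx)
    fix e :: real assume e: "e > 0"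
    obtain P where P: "P \<in> MS L" and PA: "\<forall>x\<in>{-L..L} \<times> {-L..L}. \<bar>hf x - P x\<bar> < e"
      using function_ring_on.Stone_Weierstrass_basic[OF fr[OF L] continuous_on_subset[OF hfc] e] by auto
    show "\<exists>g'. good L g' \<and> (\<forall>x\<in>dom2 L. \<bar>g x - g' x\<bar> \<le> e)"
    proof (intro exI conjI ballI)
      show "good L (\<lambda>x. SP L x * P x)" by (rule good_MS[OF L P])
      fix x assume x: "x \<in> dom2 L"
      then have xQ: "x \<in> {-L..L} \<times> {-L..L}" by (auto simp: dom2_def)
      have "\<bar>g x - SP L x * P x\<bar> = \<bar>SP L x\<bar> * \<bar>hf x - P x\<bar>"
        by (simp add: gh abs_mult[symmetric] right_diff_distrib)
      also have "\<dots> \<le> 1 * e"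
      proof (intro mult_mono)
        show "\<bar>SP L x\<bar> \<le> 1" unfolding SP_def abs_mult
          by (rule mult_le_one) (auto simp: abs_sin_le_one)
        have "\<bar>hf x - P x\<bar> < e" using PA xQ by blast
        then show "\<bar>hf x - P x\<bar> \<le> e" by simp
      qed auto
      finally show "\<bar>g x - SP L x * P x\<bar> \<le> e" by simp
    qed
  qed
qed


definition clip :: "real \<Rightarrow> real \<Rightarrow> real" where "clip n y = max (-n) (min n y)"
definition rr :: "real \<Rightarrow> nat \<Rightarrow> real \<Rightarrow> real" where "rr L n t = min 1 (max 0 (real n * (L - \<bar>t\<bar>) - 1))"
definition RR :: "real \<Rightarrow> nat \<Rightarrow> real \<times> real \<Rightarrow> real" where "RR L n x = rr L n (fst x) * rr L n (snd x)"

lemma clip_le: "0 \<le> n \<Longrightarrow> \<bar>clip n y\<bar> \<le> n" by (auto simp: clip_def)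
lemma rr_range: "0 \<le> rr L n t" "rr L n t \<le> 1" by (auto simp: rr_def)
lemma RR_range: "0 \<le> RR L n x" "RR L n x \<le> 1"
  unfolding RR_def using rr_range by (auto intro: mult_nonneg_nonneg mult_le_one)

lemma err_le:
  assumes "0 \<le> n" "0 \<le> r" "r \<le> 1"
  shows "\<bar>y - clip n y * r\<bar> \<le> \<bar>y\<bar>"
proof (cases "y \<ge> 0")
  case True
  have "0 \<le> clip n y" "clip n y \<le> y" using True assms by (auto simp: clip_def)
  moreover have "clip n y * r \<le> clip n y" using assms \<open>0 \<le> clip n y\<close> by (simp add: mult_left_le)
  moreover have "0 \<le> clip n y * r" using assms \<open>0 \<le> clip n y\<close> by simp
  ultimately show ?thesis using True by (simp add: abs_le_iff)
next
  case False
  have "clip n y \<le> 0" "y \<le> clip n y" using False assms by (auto simp: clip_def)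
  moreover have "clip n y \<le> clip n y * r" using assms \<open>clip n y \<le> 0\<close>
    using mult_left_mono_neg[of r 1 "clip n y"] by simp
  moreover have "clip n y * r \<le> 0" using assms \<open>clip n y \<le> 0\<close> by (simp add: mult_nonpos_nonneg)
  ultimately show ?thesis using False by (simp add: abs_le_iff)
qed

lemma rr_cont: "continuous_on S (rr L n)"
  unfolding rr_def by (intro continuous_intros)
lemma RR_cont: "continuous_on S (RR L n)"
  unfolding RR_def[abs_def] rr_def by (intro continuous_intros)

lemma rr_zero: "0 < n \<Longrightarrow> t \<notin> {-L + 1/real n..L - 1/real n} \<Longrightarrow> rr L n t = 0"
proof -
  assume n: "0 < n" and t: "t \<notin> {-L + 1/real n..L - 1/real n}"
  then have "L - \<bar>t\<bar> < 1 / real n" by auto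
  then have "real n * (L - \<bar>t\<bar>) < 1" using n by (simp add: field_simps)
  then show ?thesis by (simp add: rr_def)
qed

lemma rr_one: "\<bar>t\<bar> < L \<Longrightarrow> eventually (\<lambda>n. rr L n t = 1) sequentially"
proof -
  assume t: "\<bar>t\<bar> < L"
  obtain N :: nat where N: "2 / (L - \<bar>t\<bar>) < real N" using reals_Archimedean2 by blast
  show ?thesis unfolding eventually_sequentially
  proof (intro exI allI impI)
    fix n assume "N \<le> n"
    then have "2 / (L - \<bar>t\<bar>) < real n" using N by (meson less_le_trans of_nat_le_iff)
    then have "2 < real n * (L - \<bar>t\<bar>)" using t by (simp add: field_simps)
    then show "rr L n t = 1" by (simp add: rr_def)
  qed
qed

lemma powr_tri:
  fixes a b p :: real
  assumes p: "0 < p"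
  shows "\<bar>a - b\<bar> powr p \<le> 2 powr p * (\<bar>a\<bar> powr p + \<bar>b\<bar> powr p)"
proof -
  define M where "M = max \<bar>a\<bar> \<bar>b\<bar>"
  have "\<bar>a - b\<bar> \<le> 2 * M" by (simp add: M_def)
  then have "\<bar>a - b\<bar> powr p \<le> (2 * M) powr p" using p by (intro powr_mono2) auto
  also have "\<dots> = 2 powr p * M powr p" by (simp add: powr_mult)
  also have "M powr p \<le> \<bar>a\<bar> powr p + \<bar>b\<bar> powr p" by (simp add: M_def max_def)
  then have "2 powr p * M powr p \<le> 2 powr p * (\<bar>a\<bar> powr p + \<bar>b\<bar> powr p)" by (intro mult_left_mono) auto
  finally show ?thesis .
qed

lemma cont_meas: "continuous_on UNIV (f :: real \<times> real \<Rightarrow> real) \<Longrightarrow> f \<in> borel_measurable lebesgue"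
  using continuous_imp_measurable_on_sets_lebesgue[of UNIV f] lebesgue_on_UNIV_eq by simp

lemma dom2_lmeas: "dom2 L \<in> lmeasurable"
  unfolding dom2_def by (intro lmeasurable_open bounded_Times open_Times) auto


lemma D_approx:
  fixes L p \<epsilon> :: real and v :: "real \<times> real \<Rightarrow> real"
  assumes L: "L > 0" and p: "p \<ge> 1" and v: "in_Lp p (dom2 L) v" and e: "\<epsilon> > 0"
  shows "\<exists>g d. continuous_on UNIV g \<and> 0 < d \<and> d < L \<and>
    (\<forall>x. \<not> (fst x \<in> {-L+d..L-d} \<and> snd x \<in> {-L+d..L-d}) \<longrightarrow> g x = 0) \<and>
    integrable lebesgue (\<lambda>x. indicator (dom2 L) x * \<bar>v x - g x\<bar> powr p) \<and>
    integral\<^sup>L lebesgue (\<lambda>x. indicator (dom2 L) x * \<bar>v x - g x\<bar> powr p) < \<epsilon>"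
proof -
  define D where "D = dom2 L"
  have Dm: "D \<in> sets lebesgue" "emeasure lebesgue D < \<infinity>"
    using dom2_lmeas[of L] by (auto simp: D_def fmeasurable_def)
  have p0: "p > 0" using p by simp
  define w where "w x = indicator D x * v x" for x
  have wm[measurable]: "w \<in> borel_measurable lebesgue"
    using v unfolding in_Lp_def set_borel_measurable_def w_def[abs_def] D_def by simp
  have Dsets[measurable]: "D \<in> sets lebesgue" by (rule Dm(1))
  have wi: "integrable lebesgue (\<lambda>x. indicator D x * \<bar>w x\<bar> powr p)"
  proof -
    have "integrable lebesgue (\<lambda>x. indicator D x * \<bar>v x\<bar> powr p)"
      using v unfolding in_Lp_def set_integrable_def D_def by simp
    moreover have "(\<lambda>x. indicator D x * \<bar>v x\<bar> powr p) = (\<lambda>x. indicator D x * \<bar>w x\<bar> powr p)"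
      by (auto simp: w_def indicator_def fun_eq_iff)
    ultimately show ?thesis by simp
  qed
  have vw: "indicator D x * \<bar>v x - g x\<bar> powr p = indicator D x * \<bar>w x - g x\<bar> powr p" for x and g :: "real \<times> real \<Rightarrow> real"
    by (simp add: w_def indicator_def)
  have RRm[measurable]: "RR L n \<in> borel_measurable lebesgue" for n by (rule cont_meas[OF RR_cont])
  define F where "F n x = indicator D x * \<bar>w x - clip (real n) (w x) * RR L n x\<bar> powr p" for n x
  have Fm[measurable]: "F n \<in> borel_measurable lebesgue" for n unfolding F_def[abs_def] clip_def by measurable
  have Fnn: "0 \<le> F n x" for n x by (simp add: F_def)
  have Fb: "F n x \<le> indicator D x * \<bar>w x\<bar> powr p" for n x
  proof (cases "x \<in> D")
    case True
    have "\<bar>w x - clip (real n) (w x) * RR L n x\<bar> \<le> \<bar>w x\<bar>" by (rule err_le) (auto simp: RR_range)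
    then have "\<bar>w x - clip (real n) (w x) * RR L n x\<bar> powr p \<le> \<bar>w x\<bar> powr p" using p0 by (intro powr_mono2) auto
    then show ?thesis using True by (simp add: F_def)
  qed (simp add: F_def)
  have FA: "(\<lambda>n. integral\<^sup>L lebesgue (F n)) \<longlonglongrightarrow> integral\<^sup>L lebesgue (\<lambda>x::real\<times>real. 0)"
  proof -
    have b1: "AE x in lebesgue. norm (F n x) \<le> indicator D x * \<bar>w x\<bar> powr p" for n
      using Fb Fnn by (intro AE_I2) simp
    have l1: "AE x in lebesgue. (\<lambda>n. F n x) \<longlonglongrightarrow> 0"
    proof (rule AE_I2)
      fix x
      show "(\<lambda>n. F n x) \<longlonglongrightarrow> 0"
      proof (cases "x \<in> D")
        case False then show ?thesis by (simp add: F_def)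
      next
        case True
        then have x: "\<bar>fst x\<bar> < L" "\<bar>snd x\<bar> < L" by (auto simp: D_def dom2_def)
        obtain N :: nat where N: "\<bar>w x\<bar> \<le> real N" using real_arch_simple by blast
        have "eventually (\<lambda>n. \<bar>w x\<bar> \<le> real n) sequentially"
          unfolding eventually_sequentially using N by (meson order.trans of_nat_le_iff)
        with rr_one[OF x(1)] rr_one[OF x(2)]
        have "eventually (\<lambda>n. F n x = 0) sequentially"
        proof eventually_elim
          case (elim n)
          then have "clip (real n) (w x) = w x" by (auto simp: clip_def)
          then show ?case using elim p0 by (simp add: F_def RR_def)
        qed
        then show ?thesis by (rule tendsto_eventually)
      qed
    qed
    show ?thesis by (rule integral_dominated_convergence[OF _ Fm wi l1 b1]) simp
  qed
  then have FA0: "(\<lambda>n. integral\<^sup>L lebesgue (F n)) \<longlonglongrightarrow> 0" by simp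
  define e2 where "e2 = \<epsilon> / (2 * 2 powr p)"
  have e2: "e2 > 0" using e by (simp add: e2_def)
  have ev1: "eventually (\<lambda>n. integral\<^sup>L lebesgue (F n) < e2) sequentially"
    by (rule order_tendstoD(2)[OF FA0 e2])
  obtain N1 :: nat where N1: "1 / L < real N1" using reals_Archimedean2 by blast
  have ev2: "eventually (\<lambda>n. 1 / L < real n) sequentially"
    unfolding eventually_sequentially using N1 by (meson less_le_trans of_nat_le_iff)
  obtain N where NF: "integral\<^sup>L lebesgue (F N) < e2" and NL: "1 / L < real N"
    using eventually_happens'[OF sequentially_bot eventually_conj[OF ev1 ev2]] by blast
  have N0: "N > 0" using NL L by (cases N) (auto simp: field_simps)
  have dL: "1 / real N < L" using NL L N0 by (simp add: field_simps)
  have "w measurable_on UNIV" using lebesgue_measurable_imp_measurable_on[OF wm] by simp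
  then obtain Z Fc where Z: "negligible Z" and Fc: "\<And>n. continuous_on UNIV (Fc n)"
    and Fl: "\<And>x. x \<notin> Z \<Longrightarrow> (\<lambda>n. Fc n x) \<longlonglongrightarrow> w x"
    unfolding measurable_on_def by auto
  define vN where "vN x = clip (real N) (w x) * RR L N x" for x
  define G where "G n x = clip (real N) (Fc n x) * RR L N x" for n x
  have Gc: "continuous_on UNIV (G n)" for n
    unfolding G_def[abs_def] clip_def using RR_cont[of UNIV L N] Fc[of n] by (intro continuous_intros) auto
  have Gm[measurable]: "G n \<in> borel_measurable lebesgue" for n by (rule cont_meas[OF Gc])
  have vNm[measurable]: "vN \<in> borel_measurable lebesgue" unfolding vN_def[abs_def] clip_def by measurable
  define H where "H n x = indicator D x * \<bar>vN x - G n x\<bar> powr p" for n x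
  have Hm[measurable]: "H n \<in> borel_measurable lebesgue" for n unfolding H_def[abs_def] by measurable
  have Hnn: "0 \<le> H n x" for n x by (simp add: H_def)
  have Hb: "H n x \<le> indicator D x * (2 * real N) powr p" for n x
  proof (cases "x \<in> D")
    case True
    have r: "\<bar>RR L N x\<bar> \<le> 1" using RR_range[of L N x] by simp
    have "\<bar>vN x\<bar> \<le> real N * 1" unfolding vN_def abs_mult
      by (intro mult_mono clip_le) (use r in auto)
    moreover have "\<bar>G n x\<bar> \<le> real N * 1" unfolding G_def abs_mult
      by (intro mult_mono clip_le) (use r in auto)
    ultimately have "\<bar>vN x\<bar> \<le> real N" "\<bar>G n x\<bar> \<le> real N" by simp_all
    then have "\<bar>vN x - G n x\<bar> \<le> 2 * real N" by linarith
    then have "\<bar>vN x - G n x\<bar> powr p \<le> (2 * real N) powr p" using p0 by (intro powr_mono2) auto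
    then show ?thesis using True by (simp add: H_def)
  qed (simp add: H_def)
  have HBi: "integrable lebesgue (\<lambda>x. indicator D x * (2 * real N) powr p)"
    using integrable_indicator[OF Dm, of "(2 * real N) powr p"] by simp
  have HA: "(\<lambda>n. integral\<^sup>L lebesgue (H n)) \<longlonglongrightarrow> integral\<^sup>L lebesgue (\<lambda>x::real\<times>real. 0)"
  proof -
    have b2: "AE x in lebesgue. norm (H n x) \<le> indicator D x * (2 * real N) powr p" for n
      using Hb Hnn by (intro AE_I2) simp
    have "AE x in lebesgue. x \<notin> Z" using Z by (intro AE_not_in) (simp add: negligible_iff_null_sets)
    then have l2: "AE x in lebesgue. (\<lambda>n. H n x) \<longlonglongrightarrow> 0"
    proof eventually_elim
      case (elim x)
      have "(\<lambda>n. G n x) \<longlonglongrightarrow> vN x"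
        unfolding G_def vN_def clip_def
        by (intro tendsto_intros Fl elim)
      then have "(\<lambda>n. \<bar>vN x - G n x\<bar>) \<longlonglongrightarrow> \<bar>vN x - vN x\<bar>" by (intro tendsto_intros)
      then have "(\<lambda>n. \<bar>vN x - G n x\<bar> powr p) \<longlonglongrightarrow> 0"
        using p0 by (intro tendsto_zero_powrI) auto
      then have "(\<lambda>n. indicator D x * \<bar>vN x - G n x\<bar> powr p) \<longlonglongrightarrow> indicator D x * 0"
        by (intro tendsto_intros)
      then show ?case by (simp add: H_def)
    qed
    show ?thesis by (rule integral_dominated_convergence[OF _ Hm HBi l2 b2]) simp
  qed
  then have HA0: "(\<lambda>n. integral\<^sup>L lebesgue (H n)) \<longlonglongrightarrow> 0" by simp
  obtain n where Hn: "integral\<^sup>L lebesgue (H n) < e2"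
    using eventually_happens'[OF sequentially_bot order_tendstoD(2)[OF HA0 e2]] by blast
  define g where "g = G n"
  have Fi: "integrable lebesgue (F N)"
    by (rule Bochner_Integration.integrable_bound[OF wi Fm]) (use Fb Fnn in \<open>auto intro!: AE_I2\<close>)
  have Hi: "integrable lebesgue (H n)"
    by (rule Bochner_Integration.integrable_bound[OF HBi Hm]) (use Hb Hnn in \<open>auto intro!: AE_I2\<close>)
  have pw: "indicator D x * \<bar>w x - g x\<bar> powr p \<le> 2 powr p * (F N x + H n x)" for x
  proof (cases "x \<in> D")
    case True
    have "\<bar>(w x - vN x) - (g x - vN x)\<bar> powr p \<le> 2 powr p * (\<bar>w x - vN x\<bar> powr p + \<bar>g x - vN x\<bar> powr p)"
      by (rule powr_tri[OF p0])
    then show ?thesis using True by (simp add: F_def H_def g_def vN_def abs_minus_commute)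
  next
    case False then show ?thesis using Fnn[of N x] Hnn[of n x] by simp
  qed
  have Li: "integrable lebesgue (\<lambda>x. indicator D x * \<bar>w x - g x\<bar> powr p)"
  proof (rule Bochner_Integration.integrable_bound[where f="\<lambda>x. 2 powr p * (F N x + H n x)"])
    show "integrable lebesgue (\<lambda>x. 2 powr p * (F N x + H n x))" using Fi Hi by auto
    show "(\<lambda>x. indicator D x * \<bar>w x - g x\<bar> powr p) \<in> borel_measurable lebesgue"
      unfolding g_def by measurable
    show "AE x in lebesgue. norm (indicator D x * \<bar>w x - g x\<bar> powr p) \<le> norm (2 powr p * (F N x + H n x))"
      using pw Fnn Hnn by (intro AE_I2) (simp add: abs_of_nonneg add_nonneg_nonneg)
  qed
  have "integral\<^sup>L lebesgue (\<lambda>x. indicator D x * \<bar>w x - g x\<bar> powr p) \<le> integral\<^sup>L lebesgue (\<lambda>x. 2 powr p * (F N x + H n x))"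
    by (rule integral_mono[OF Li]) (use Fi Hi pw in auto)
  also have "\<dots> = 2 powr p * (integral\<^sup>L lebesgue (F N) + integral\<^sup>L lebesgue (H n))"
    using Fi Hi by simp
  also have "\<dots> < 2 powr p * (e2 + e2)" using NF Hn by (intro mult_strict_left_mono) auto
  also have "\<dots> = \<epsilon>" by (simp add: e2_def)
  finally have fin: "integral\<^sup>L lebesgue (\<lambda>x. indicator D x * \<bar>w x - g x\<bar> powr p) < \<epsilon>" .
  have supp: "g x = 0" if "\<not> (fst x \<in> {-L + 1/real N..L - 1/real N} \<and> snd x \<in> {-L + 1/real N..L - 1/real N})" for x
    using that rr_zero[OF N0, of "fst x" L] rr_zero[OF N0, of "snd x" L] by (auto simp: g_def G_def RR_def)
  show ?thesis
  proof (intro exI conjI allI impI)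
    show "continuous_on UNIV g" unfolding g_def by (rule Gc)
    show "0 < 1 / real N" using N0 by simp
    show "1 / real N < L" by (rule dL)
    show "g x = 0" if "\<not> (fst x \<in> {-L + 1/real N..L - 1/real N} \<and> snd x \<in> {-L + 1/real N..L - 1/real N})" for x
      using supp[OF that] .
    show "integrable lebesgue (\<lambda>x. indicator (dom2 L) x * \<bar>v x - g x\<bar> powr p)"
      using Li unfolding D_def[symmetric] vw .
    show "integral\<^sup>L lebesgue (\<lambda>x. indicator (dom2 L) x * \<bar>v x - g x\<bar> powr p) < \<epsilon>"
      using fin unfolding D_def[symmetric] vw .
  qed
qed


theorem corollary5p4:
  fixes L p :: real and v :: "real \<times> real \<Rightarrow> real"
  assumes "L > 0" and "p \<ge> 1" and "in_Lp p (dom2 L) v"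
  shows "(\<lambda>m. INF vh \<in> Vh L m. Lp_norm p (dom2 L) (\<lambda>x. v x - vh x)) \<longlonglongrightarrow> 0"
proof (rule LIMSEQ_I)
  note L = assms(1) and p = assms(2) and v = assms(3)
  have p0: "p > 0" using p by simp
  define D where "D = dom2 L"
  have Dm: "D \<in> sets lebesgue" "emeasure lebesgue D < \<infinity>"
    using dom2_lmeas[of L] by (auto simp: D_def fmeasurable_def)
  define \<mu>D where "\<mu>D = measure lebesgue D"
  have \<mu>D: "\<mu>D \<ge> 0" by (simp add: \<mu>D_def)
  have LpE: "Lp_norm p D f = (integral\<^sup>L lebesgue (\<lambda>x. indicator D x * \<bar>f x\<bar> powr p)) powr (1/p)" for f
    by (simp add: Lp_norm_def set_lebesgue_integral_def)
  fix r :: real assume r: "r > 0"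
  define \<epsilon>0 where "\<epsilon>0 = (r/2) powr p"
  have \<epsilon>0: "\<epsilon>0 > 0" using r by (simp add: \<epsilon>0_def)
  define \<epsilon>1 where "\<epsilon>1 = \<epsilon>0 / (2 * 2 powr p)"
  have \<epsilon>1: "\<epsilon>1 > 0" using \<epsilon>0 by (simp add: \<epsilon>1_def)
  obtain g d where gc: "continuous_on UNIV g" and d: "0 < d" "d < L"
    and gs: "\<forall>x. \<not> (fst x \<in> {-L+d..L-d} \<and> snd x \<in> {-L+d..L-d}) \<longrightarrow> g x = 0"
    and gi: "integrable lebesgue (\<lambda>x. indicator D x * \<bar>v x - g x\<bar> powr p)"
    and gI: "integral\<^sup>L lebesgue (\<lambda>x. indicator D x * \<bar>v x - g x\<bar> powr p) < \<epsilon>1"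
    using D_approx[OF L p v \<epsilon>1] unfolding D_def by blast
  have good: "good L g" by (rule good_cont[OF L d gc]) (use gs in auto)
  define c where "c = \<epsilon>0 / (2 * 2 powr p * (\<mu>D + 1))"
  have c: "c > 0" using \<epsilon>0 \<mu>D by (simp add: c_def)
  define \<eta> where "\<eta> = c powr (1/p)"
  have \<eta>: "\<eta> > 0" using c by (simp add: \<eta>_def)
  have \<eta>p: "\<eta> powr p = c" using c p0 by (simp add: \<eta>_def powr_powr)
  obtain M where M: "\<forall>m\<ge>M. \<exists>vh\<in>Vh L m. \<forall>x\<in>dom2 L. \<bar>g x - vh x\<bar> \<le> \<eta>"
    using good \<eta> unfolding good_def by blast
  show "\<exists>no. \<forall>m\<ge>no. norm ((INF vh \<in> Vh L m. Lp_norm p (dom2 L) (\<lambda>x. v x - vh x)) - 0) < r"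
  proof (intro exI allI impI)
    fix m assume m: "M \<le> m"
    then obtain vh where vh: "vh \<in> Vh L m" and vhg: "\<forall>x\<in>D. \<bar>g x - vh x\<bar> \<le> \<eta>"
      using M unfolding D_def by blast
    have pw: "indicator D x * \<bar>v x - vh x\<bar> powr p \<le> 2 powr p * (indicator D x * \<bar>v x - g x\<bar> powr p + c * indicator D x)" for x
    proof (cases "x \<in> D")
      case True
      have "\<bar>(v x - g x) - (vh x - g x)\<bar> powr p \<le> 2 powr p * (\<bar>v x - g x\<bar> powr p + \<bar>vh x - g x\<bar> powr p)"
        by (rule powr_tri[OF p0])
      moreover have "\<bar>vh x - g x\<bar> powr p \<le> \<eta> powr p"
        using vhg True p0 by (intro powr_mono2) (auto simp: abs_minus_commute)
      ultimately have "\<bar>v x - vh x\<bar> powr p \<le> 2 powr p * (\<bar>v x - g x\<bar> powr p + c)"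
        using \<eta>p by (smt (verit, ccfv_threshold) mult_left_mono powr_ge_zero)
      then show ?thesis using True by simp
    qed simp
    have ci: "integrable lebesgue (\<lambda>x. c * indicator D x)"
      using integrable_indicator[OF Dm, of c] by (simp add: mult.commute)
    have Iv: "integral\<^sup>L lebesgue (\<lambda>x. indicator D x * \<bar>v x - vh x\<bar> powr p) \<le> \<epsilon>0"
    proof (cases "integrable lebesgue (\<lambda>x. indicator D x * \<bar>v x - vh x\<bar> powr p)")
      case True
      have "integral\<^sup>L lebesgue (\<lambda>x. indicator D x * \<bar>v x - vh x\<bar> powr p)
          \<le> integral\<^sup>L lebesgue (\<lambda>x. 2 powr p * (indicator D x * \<bar>v x - g x\<bar> powr p + c * indicator D x))"
        by (rule integral_mono[OF True]) (use gi ci pw in auto)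
      also have "\<dots> = 2 powr p * (integral\<^sup>L lebesgue (\<lambda>x. indicator D x * \<bar>v x - g x\<bar> powr p) + c * \<mu>D)"
        using gi ci Dm by (simp add: \<mu>D_def)
      also have "\<dots> \<le> 2 powr p * (\<epsilon>1 + c * \<mu>D)"
        using gI by (intro mult_left_mono) auto
      also have "\<dots> \<le> \<epsilon>0"
      proof -
        have "c * \<mu>D \<le> c * (\<mu>D + 1)" using c by simp
        also have "c * (\<mu>D + 1) = \<epsilon>0 / (2 * 2 powr p)" using \<mu>D unfolding c_def by simp
        finally have "c * \<mu>D \<le> \<epsilon>0 / (2 * 2 powr p)" .
        then have "2 powr p * (\<epsilon>1 + c * \<mu>D) \<le> 2 powr p * (\<epsilon>0 / (2 * 2 powr p) + \<epsilon>0 / (2 * 2 powr p))"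
          unfolding \<epsilon>1_def by (intro mult_left_mono) auto
        also have "\<dots> = \<epsilon>0" by (simp add: field_simps)
        finally show ?thesis .
      qed
      finally show ?thesis .
    next
      case False
      then show ?thesis using \<epsilon>0 by (simp add: not_integrable_integral_eq)
    qed
    have I0: "0 \<le> integral\<^sup>L lebesgue (\<lambda>x. indicator D x * \<bar>v x - vh x\<bar> powr p)"
      by (rule integral_nonneg_AE) auto
    have "Lp_norm p D (\<lambda>x. v x - vh x) \<le> \<epsilon>0 powr (1/p)"
      unfolding LpE using Iv I0 p0 by (intro powr_mono2) auto
    also have "\<epsilon>0 powr (1/p) = r/2" using r p0 by (simp add: \<epsilon>0_def powr_powr)
    finally have vhb: "Lp_norm p D (\<lambda>x. v x - vh x) \<le> r/2" .
    have nn: "0 \<le> Lp_norm p D (\<lambda>x. v x - vh x)" for vh by (simp add: Lp_norm_def)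
    have bdd: "bdd_below ((\<lambda>vh. Lp_norm p D (\<lambda>x. v x - vh x)) ` Vh L m)"
      using nn by (intro bdd_belowI[of _ 0]) auto
    have le: "(INF vh \<in> Vh L m. Lp_norm p D (\<lambda>x. v x - vh x)) \<le> r/2"
      using cINF_lower[OF bdd vh] vhb by linarith
    have ge: "0 \<le> (INF vh \<in> Vh L m. Lp_norm p D (\<lambda>x. v x - vh x))"
      using vh nn by (intro cINF_greatest) auto
    show "norm ((INF vh \<in> Vh L m. Lp_norm p (dom2 L) (\<lambda>x. v x - vh x)) - 0) < r"
      using le ge r unfolding D_def by simp
  qed
qed

end
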